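(* Let $n\geq 2$ and let $G$ be the Coxeter group with generators $t_0,t_1,\dots,t_{n-1}$ and relations $t_j^2=1$ for all $j$; $(t_0t_2)^4=1$ (if $n\geq 3$); $(t_0t_j)^2=1$ for $3\leq j\leq n-1$; $(t_it_{i+1})^3=1$ for $1\leq i\leq n-2$; $(t_it_j)^2=1$ for $1\leq i,j\leq n-1$ with $|i-j|\geq 2$; and no relation between $t_0$ and $t_1$ (i.e. $m(t_0,t_1)=\infty$). Then the assignment $t_0\mapsto\sigma_{12}$, $t_i\mapsto\alpha_{(i,i+1)}$ ($1\leq i\leq n-1$) extends to a surjective homomorphism $G\to\mathrm{Aut}(W_n)$. Moreover, the subgroup of $\mathrm{Aut}(W_n)$ generated by $\{\sigma_{12}\}\cup\{\alpha_{(i,i+1)}\mid i=2,\dots,n-1\}$ is finite.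
   Context: $W_n=\langle s_1,\dots,s_n\mid s_1^2,\dots,s_n^2\rangle$. For $1\leq i\neq j\leq n$, $\sigma_{ij}\in\mathrm{Aut}(W_n)$ is defined by $\sigma_{ij}(s_j)=s_is_js_i$ and $\sigma_{ij}(s_k)=s_k$ for $k\neq j$. For $\pi\in\mathrm{Sym}(n)$, $\alpha_\pi\in\mathrm{Aut}(W_n)$ is defined by $\alpha_\pi(s_k)=s_{\pi(k)}$. *)

theory Defs
  imports "HOL-Algebra.Algebra" "HOL-Combinatorics.Transposition"
begin

inductive_set pres_eq :: "'a set \<Rightarrow> 'a list set \<Rightarrow> ('a list \<times> 'a list) set"
  for S :: "'a set" and R :: "'a list set" where
  refl: "set w \<subseteq> S \<Longrightarrow> (w, w) \<in> pres_eq S R"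
| sym: "(u, v) \<in> pres_eq S R \<Longrightarrow> (v, u) \<in> pres_eq S R"
| trans: "(u, v) \<in> pres_eq S R \<Longrightarrow> (v, w) \<in> pres_eq S R \<Longrightarrow> (u, w) \<in> pres_eq S R"
| rel: "set u \<subseteq> S \<Longrightarrow> set v \<subseteq> S \<Longrightarrow> r \<in> R \<Longrightarrow> set r \<subseteq> S
        \<Longrightarrow> (u @ r @ v, u @ v) \<in> pres_eq S R"

text \<open>The quotient of the free monoid S* by this congruence.  When R contains
  [a,a] for every a in S (all generators are involutions) this is exactly the
  group with presentation (S | R).\<close>

definition pres_group :: "'a set \<Rightarrow> 'a list set \<Rightarrow> 'a list set monoid" where
  "pres_group S R =
     \<lparr>carrier = lists S // pres_eq S R,
      monoid.mult = (\<lambda>A B. \<Union>{pres_eq S R `` {x @ y} | x y. x \<in> A \<and> y \<in> B}),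
      monoid.one = pres_eq S R `` {[]}\<rparr>"

definition pcls :: "'a set \<Rightarrow> 'a list set \<Rightarrow> 'a list \<Rightarrow> 'a list set" where
  "pcls S R w = pres_eq S R `` {w}"

definition cox_word :: "'a \<Rightarrow> 'a \<Rightarrow> nat \<Rightarrow> 'a list" where
  "cox_word a b m = concat (replicate m [a, b])"

definition W_gens :: "nat \<Rightarrow> nat set" where
  "W_gens n = {1..n}"

definition W_rels :: "nat \<Rightarrow> nat list set" where
  "W_rels n = {[k, k] | k. k \<in> {1..n}}"

definition W :: "nat \<Rightarrow> nat list set monoid" where
  "W n = pres_group (W_gens n) (W_rels n)"

text \<open>Endomorphism of W_n determined by the images f k (words) of the generators s_k.\<close>

definition W_subst :: "nat \<Rightarrow> (nat \<Rightarrow> nat list) \<Rightarrow> nat list set \<Rightarrow> nat list set" where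
  "W_subst n f = (\<lambda>A \<in> carrier (W n).
      \<Union>{pcls (W_gens n) (W_rels n) (concat (map f w)) | w. w \<in> A})"

definition sigma :: "nat \<Rightarrow> nat \<Rightarrow> nat \<Rightarrow> nat list set \<Rightarrow> nat list set" where
  "sigma n i j = W_subst n (\<lambda>k. if k = j then [i, j, i] else [k])"

definition alpha :: "nat \<Rightarrow> (nat \<Rightarrow> nat) \<Rightarrow> nat list set \<Rightarrow> nat list set" where
  "alpha n p = W_subst n (\<lambda>k. [p k])"

text \<open>Generators t_0,...,t_(n-1) are represented by the numbers 0,...,n-1.
  m(t_0,t_1) = infinity: no relator between t_0 and t_1.\<close>

definition G_gens :: "nat \<Rightarrow> nat set" where
  "G_gens n = {..<n}"

definition G_rels :: "nat \<Rightarrow> nat list set" where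
  "G_rels n =
     {[j, j] | j. j < n}
   \<union> (if 3 \<le> n then {cox_word 0 2 4} else {})
   \<union> {cox_word 0 j 2 | j. 3 \<le> j \<and> j < n}
   \<union> {cox_word i (i + 1) 3 | i. 1 \<le> i \<and> i + 1 < n}
   \<union> {cox_word i j 2 | i j. 1 \<le> i \<and> i < n \<and> 1 \<le> j \<and> j < n \<and> (i + 2 \<le> j \<or> j + 2 \<le> i)}"

definition G :: "nat \<Rightarrow> nat list set monoid" where
  "G n = pres_group (G_gens n) (G_rels n)"

definition G_gen :: "nat \<Rightarrow> nat \<Rightarrow> nat list set" where
  "G_gen n j = pcls (G_gens n) (G_rels n) [j]"

end

theory Submission
  imports Defs "HOL-Library.Sublist" "HOL-Combinatorics.Permutations"
begin


section \<open>Generic presentations\<close>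

lemma pres_eq_lists: "(u,v) \<in> pres_eq S R \<Longrightarrow> set u \<subseteq> S \<and> set v \<subseteq> S"
  by (induction rule: pres_eq.induct) auto

lemma pres_eq_ctxt:
  "(u,v) \<in> pres_eq S R \<Longrightarrow> set x \<subseteq> S \<Longrightarrow> set y \<subseteq> S \<Longrightarrow> (x@u@y, x@v@y) \<in> pres_eq S R"
proof (induction rule: pres_eq.induct)
  case (refl w) thus ?case by (intro pres_eq.refl) auto
next
  case (sym u v) thus ?case by (blast intro: pres_eq.sym)
next
  case (trans u v w) thus ?case by (blast intro: pres_eq.trans)
next
  case (rel u v r)
  have "((x@u)@r@(v@y), (x@u)@(v@y)) \<in> pres_eq S R" by (rule pres_eq.rel) (use rel in auto)
  thus ?case by simp
qed

lemma pres_eq_append: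
  assumes "(u,u') \<in> pres_eq S R" "(v,v') \<in> pres_eq S R"
  shows "(u@v, u'@v') \<in> pres_eq S R"
proof -
  have l: "set v \<subseteq> S" "set u' \<subseteq> S" using pres_eq_lists[OF assms(1)] pres_eq_lists[OF assms(2)] by auto
  have "([]@u@v, []@u'@v) \<in> pres_eq S R"
    using pres_eq_ctxt[OF assms(1), of "[]" v] l by auto
  moreover have "(u'@v@[], u'@v'@[]) \<in> pres_eq S R"
    using pres_eq_ctxt[OF assms(2), of u' "[]"] l by auto
  ultimately show ?thesis by (auto intro: pres_eq.trans)
qed

lemma pcls_eq_iff:
  assumes "set u \<subseteq> S"
  shows "pcls S R u = pcls S R v \<longleftrightarrow> (u,v) \<in> pres_eq S R"
proof
  assume "pcls S R u = pcls S R v"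
  moreover have "u \<in> pcls S R u" using assms by (auto simp: pcls_def intro: pres_eq.refl)
  ultimately have "(v,u) \<in> pres_eq S R" by (auto simp: pcls_def)
  thus "(u,v) \<in> pres_eq S R" by (rule pres_eq.sym)
next
  assume "(u,v) \<in> pres_eq S R"
  thus "pcls S R u = pcls S R v"
    by (auto simp: pcls_def intro: pres_eq.trans pres_eq.sym)
qed

lemma pcls_self: "set u \<subseteq> S \<Longrightarrow> u \<in> pcls S R u"
  by (auto simp: pcls_def intro: pres_eq.refl)

lemma pcls_mem: "w \<in> pcls S R u \<longleftrightarrow> (u,w) \<in> pres_eq S R"
  by (auto simp: pcls_def)

lemma carrier_pres_group: "carrier (pres_group S R) = {pcls S R w | w. set w \<subseteq> S}"
  by (auto simp: pres_group_def quotient_def pcls_def)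

lemma carrier_pres_groupE:
  assumes "A \<in> carrier (pres_group S R)"
  obtains w where "set w \<subseteq> S" "A = pcls S R w"
  using assms by (auto simp: carrier_pres_group)

lemma pcls_in_carrier: "set w \<subseteq> S \<Longrightarrow> pcls S R w \<in> carrier (pres_group S R)"
  by (auto simp: carrier_pres_group)

lemma carrier_subset_lists: "A \<in> carrier (pres_group S R) \<Longrightarrow> w \<in> A \<Longrightarrow> set w \<subseteq> S"
  by (auto simp: carrier_pres_group pcls_def dest: pres_eq_lists)

lemma one_pres_group: "\<one>\<^bsub>pres_group S R\<^esub> = pcls S R []"
  by (simp add: pres_group_def pcls_def)

lemma mult_pres_group:
  assumes "set u \<subseteq> S" "set v \<subseteq> S"
  shows "pcls S R u \<otimes>\<^bsub>pres_group S R\<^esub> pcls S R v = pcls S R (u@v)"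
proof -
  have eq: "pres_eq S R `` {x@y} = pcls S R (u@v)" if "x \<in> pcls S R u" "y \<in> pcls S R v" for x y
  proof -
    have "(u@v, x@y) \<in> pres_eq S R" using that by (auto simp: pcls_def intro: pres_eq_append)
    hence "pcls S R (x@y) = pcls S R (u@v)"
      using pcls_eq_iff[of "u@v" S R "x@y"] assms by auto
    thus ?thesis by (simp add: pcls_def)
  qed
  have "u \<in> pcls S R u" "v \<in> pcls S R v" using assms by (auto intro: pcls_self)
  hence "{pres_eq S R `` {x @ y} |x y. x \<in> pcls S R u \<and> y \<in> pcls S R v} = {pcls S R (u@v)}"
    using eq by blast
  thus ?thesis by (simp add: pres_group_def)
qed

lemma rev_cancel:
  assumes "\<forall>a\<in>S. [a,a] \<in> R" "set w \<subseteq> S"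
  shows "(rev w @ w, []) \<in> pres_eq S R"
  using assms(2)
proof (induction w)
  case Nil thus ?case by (auto intro: pres_eq.refl)
next
  case (Cons a w)
  have "(rev w @ [a,a] @ w, rev w @ w) \<in> pres_eq S R"
    by (rule pres_eq.rel) (use Cons assms in auto)
  thus ?case using Cons by (auto intro: pres_eq.trans)
qed

lemma pres_group_group:
  assumes "\<forall>a\<in>S. [a,a] \<in> R"
  shows "group (pres_group S R)"
proof (rule groupI)
  fix x y assume "x \<in> carrier (pres_group S R)" "y \<in> carrier (pres_group S R)"
  then obtain u v where "set u \<subseteq> S" "x = pcls S R u" "set v \<subseteq> S" "y = pcls S R v"
    by (auto elim!: carrier_pres_groupE)
  thus "x \<otimes>\<^bsub>pres_group S R\<^esub> y \<in> carrier (pres_group S R)"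
    by (simp add: mult_pres_group pcls_in_carrier)
next
  show "\<one>\<^bsub>pres_group S R\<^esub> \<in> carrier (pres_group S R)"
    by (auto simp: one_pres_group intro!: pcls_in_carrier)
next
  fix x y z assume "x \<in> carrier (pres_group S R)" "y \<in> carrier (pres_group S R)"
    "z \<in> carrier (pres_group S R)"
  thus "x \<otimes>\<^bsub>pres_group S R\<^esub> y \<otimes>\<^bsub>pres_group S R\<^esub> z =
        x \<otimes>\<^bsub>pres_group S R\<^esub> (y \<otimes>\<^bsub>pres_group S R\<^esub> z)"
    by (auto elim!: carrier_pres_groupE simp: mult_pres_group)
next
  fix x assume "x \<in> carrier (pres_group S R)"
  thus "\<one>\<^bsub>pres_group S R\<^esub> \<otimes>\<^bsub>pres_group S R\<^esub> x = x"
    by (auto elim!: carrier_pres_groupE simp: mult_pres_group one_pres_group)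
next
  fix x assume "x \<in> carrier (pres_group S R)"
  then obtain w where w: "set w \<subseteq> S" "x = pcls S R w" by (auto elim!: carrier_pres_groupE)
  have "pcls S R (rev w) \<otimes>\<^bsub>pres_group S R\<^esub> x = pcls S R []"
    using w rev_cancel[OF assms w(1)] pcls_eq_iff[of "rev w @ w" S R "[]"]
    by (simp add: mult_pres_group)
  thus "\<exists>y\<in>carrier (pres_group S R). y \<otimes>\<^bsub>pres_group S R\<^esub> x = \<one>\<^bsub>pres_group S R\<^esub>"
    using w by (auto simp: one_pres_group intro!: bexI[of _ "pcls S R (rev w)"] pcls_in_carrier)
qed

definition ev :: "('b,'c) monoid_scheme \<Rightarrow> ('a \<Rightarrow> 'b) \<Rightarrow> 'a list \<Rightarrow> 'b" where
  "ev H f w = foldr (\<lambda>a b. f a \<otimes>\<^bsub>H\<^esub> b) w \<one>\<^bsub>H\<^esub>"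

lemma ev_simps [simp]: "ev H f [] = \<one>\<^bsub>H\<^esub>" "ev H f (a#w) = f a \<otimes>\<^bsub>H\<^esub> ev H f w"
  by (simp_all add: ev_def)

lemma img_sub: "set u \<subseteq> S \<Longrightarrow> f ` S \<subseteq> C \<Longrightarrow> f ` set u \<subseteq> C" by blast

lemma ev_closed: "monoid H \<Longrightarrow> f ` set w \<subseteq> carrier H \<Longrightarrow> ev H f w \<in> carrier H"
  by (induction w) (auto intro: monoid.m_closed)

lemma ev_append:
  "monoid H \<Longrightarrow> f ` set u \<subseteq> carrier H \<Longrightarrow> f ` set v \<subseteq> carrier H
   \<Longrightarrow> ev H f (u@v) = ev H f u \<otimes>\<^bsub>H\<^esub> ev H f v"
  by (induction u) (auto simp: monoid.m_assoc ev_closed)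

lemma ev_cong:
  assumes "monoid H" "f ` S \<subseteq> carrier H" "\<forall>r\<in>R. set r \<subseteq> S \<longrightarrow> ev H f r = \<one>\<^bsub>H\<^esub>"
  shows "(u,v) \<in> pres_eq S R \<Longrightarrow> ev H f u = ev H f v"
proof (induction rule: pres_eq.induct)
  case (rel u v r)
  have c: "f ` set u \<subseteq> carrier H" "f ` set v \<subseteq> carrier H" "f ` set r \<subseteq> carrier H"
    using img_sub[OF rel.hyps(1) assms(2)] img_sub[OF rel.hyps(2) assms(2)]
      img_sub[OF rel.hyps(4) assms(2)] by auto
  have rv: "f ` set (r@v) \<subseteq> carrier H" using c by auto
  have "ev H f (u@r@v) = ev H f u \<otimes>\<^bsub>H\<^esub> (ev H f r \<otimes>\<^bsub>H\<^esub> ev H f v)"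
    using ev_append[OF assms(1) c(1) rv] ev_append[OF assms(1) c(3) c(2)] by simp
  also have "\<dots> = ev H f u \<otimes>\<^bsub>H\<^esub> ev H f v"
    using rel assms c by (simp add: ev_closed monoid.l_one)
  finally show ?case using ev_append[OF assms(1) c(1) c(2)] by simp
qed auto

definition pind :: "('b,'c) monoid_scheme \<Rightarrow> ('a \<Rightarrow> 'b) \<Rightarrow> 'a list set \<Rightarrow> 'b" where
  "pind H f A = ev H f (SOME w. w \<in> A)"

lemma pind_pcls:
  assumes "monoid H" "f ` S \<subseteq> carrier H" "\<forall>r\<in>R. set r \<subseteq> S \<longrightarrow> ev H f r = \<one>\<^bsub>H\<^esub>"
    "set w \<subseteq> S"
  shows "pind H f (pcls S R w) = ev H f w"
proof -
  have "w \<in> pcls S R w" using assms by (rule_tac pcls_self)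
  hence "(SOME x. x \<in> pcls S R w) \<in> pcls S R w" by (rule someI)
  hence "(w, SOME x. x \<in> pcls S R w) \<in> pres_eq S R" by (simp add: pcls_mem)
  thus ?thesis unfolding pind_def using ev_cong[OF assms(1-3)] by metis
qed

lemma pind_hom:
  assumes "monoid H" "f ` S \<subseteq> carrier H" "\<forall>r\<in>R. set r \<subseteq> S \<longrightarrow> ev H f r = \<one>\<^bsub>H\<^esub>"
  shows "pind H f \<in> hom (pres_group S R) H"
proof (rule homI)
  fix x assume "x \<in> carrier (pres_group S R)"
  then obtain w where "set w \<subseteq> S" "x = pcls S R w" by (auto elim!: carrier_pres_groupE)
  thus "pind H f x \<in> carrier H" using assms by (auto simp: pind_pcls intro!: ev_closed)
next
  fix x y assume "x \<in> carrier (pres_group S R)" "y \<in> carrier (pres_group S R)"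
  then obtain u v where "set u \<subseteq> S" "x = pcls S R u" "set v \<subseteq> S" "y = pcls S R v"
    by (auto elim!: carrier_pres_groupE)
  thus "pind H f (x \<otimes>\<^bsub>pres_group S R\<^esub> y) = pind H f x \<otimes>\<^bsub>H\<^esub> pind H f y"
    using assms by (simp add: pind_pcls mult_pres_group ev_append img_sub)
qed



abbreviation EW :: "nat \<Rightarrow> (nat list \<times> nat list) set" where
  "EW n \<equiv> pres_eq (W_gens n) (W_rels n)"
abbreviation cl :: "nat \<Rightarrow> nat list \<Rightarrow> nat list set" where
  "cl n w \<equiv> pcls (W_gens n) (W_rels n) w"

fun cons' :: "nat \<Rightarrow> nat list \<Rightarrow> nat list" where
  "cons' a [] = [a]"
| "cons' a (b#v) = (if a = b then v else a#b#v)"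

fun red :: "nat list \<Rightarrow> nat list" where
  "red [] = []"
| "red (a#w) = cons' a (red w)"

fun rd :: "nat list \<Rightarrow> bool" where
  "rd [] = True"
| "rd [a] = True"
| "rd (a#b#w) = (a \<noteq> b \<and> rd (b#w))"

lemma rd_Cons: "rd (a#w) \<longleftrightarrow> rd w \<and> (w \<noteq> [] \<longrightarrow> a \<noteq> hd w)"
  by (cases w) auto

lemma rd_append: "rd (A@B) \<longleftrightarrow> rd A \<and> rd B \<and> (A \<noteq> [] \<longrightarrow> B \<noteq> [] \<longrightarrow> last A \<noteq> hd B)"
  by (induction A) (auto simp: rd_Cons)

lemma rd_rev [simp]: "rd (rev x) = rd x"
  by (induction x) (auto simp: rd_append rd_Cons last_rev hd_rev)

lemma rd_cons': "rd x \<Longrightarrow> rd (cons' a x)"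
  by (cases x rule: rd.cases) auto

lemma rd_red: "rd (red w)"
  by (induction w) (auto intro: rd_cons')

lemma red_rd: "rd w \<Longrightarrow> red w = w"
  by (induction w rule: rd.induct) auto

lemma red_red [simp]: "red (red w) = red w"
  by (simp add: red_rd rd_red)

lemma red_append: "red (u@v) = red (u @ red v)"
  by (induction u) auto

lemma cons'_cons': "rd x \<Longrightarrow> cons' a (cons' a x) = x"
  by (cases x rule: rd.cases) auto

lemma red_cancel: "red (u@[k,k]@v) = red (u@v)"
proof -
  have "red (u@[k,k]@v) = red (u @ red ([k,k]@v))" by (rule red_append)
  also have "red ([k,k]@v) = red v" by (simp add: cons'_cons' rd_red)
  finally show ?thesis by (simp add: red_append[symmetric])
qed

lemma EW_red: "(u,v) \<in> EW n \<Longrightarrow> red u = red v"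
proof (induction rule: pres_eq.induct)
  case (rel u v r) thus ?case using red_cancel[of u _ v] by (auto simp: W_rels_def)
qed auto

lemma set_cons': "set (cons' a x) \<subseteq> insert a (set x)"
  by (cases x) auto

lemma set_red: "set (red w) \<subseteq> set w"
  by (induction w) (use set_cons' in fastforce)+

lemma length_cons': "length (cons' a x) \<le> Suc (length x)"
  by (cases x) auto

lemma length_red: "length (red w) \<le> length w"
  by (induction w) (use length_cons' le_trans in fastforce)+

lemma EW_cons: "(u,v) \<in> EW n \<Longrightarrow> a \<in> W_gens n \<Longrightarrow> (a#u, a#v) \<in> EW n"
  using pres_eq_ctxt[of u v "W_gens n" "W_rels n" "[a]" "[]"] by simp

lemma red_EW: "set w \<subseteq> W_gens n \<Longrightarrow> (w, red w) \<in> EW n"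
proof (induction w)
  case Nil thus ?case by (auto intro: pres_eq.refl)
next
  case (Cons a w)
  hence 1: "(a#w, a#red w) \<in> EW n" by (auto intro: EW_cons)
  have sr: "set (red w) \<subseteq> W_gens n" using Cons set_red by fastforce
  show ?case
  proof (cases "red w")
    case Nil thus ?thesis using 1 by simp
  next
    case (Cons b y)
    show ?thesis
    proof (cases "a = b")
      case True
      have "([]@[a,a]@y, []@y) \<in> EW n"
        by (rule pres_eq.rel) (use sr Cons \<open>set (a#w) \<subseteq> W_gens n\<close> True in \<open>auto simp: W_rels_def W_gens_def\<close>)
      thus ?thesis using 1 Cons True by (auto intro: pres_eq.trans)
    qed (use 1 Cons in auto)
  qed
qed

lemma EW_iff: "set u \<subseteq> W_gens n \<Longrightarrow> set v \<subseteq> W_gens n \<Longrightarrow> (u,v) \<in> EW n \<longleftrightarrow> red u = red v"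
  by (metis EW_red red_EW pres_eq.sym pres_eq.trans)

lemma cl_eq_iff: "set u \<subseteq> W_gens n \<Longrightarrow> set v \<subseteq> W_gens n \<Longrightarrow> cl n u = cl n v \<longleftrightarrow> red u = red v"
  by (simp add: pcls_eq_iff EW_iff)

lemma rev_app_cancel:
  assumes "set p \<subseteq> W_gens n" "set u \<subseteq> W_gens n" "set q \<subseteq> W_gens n"
  shows "red (p @ rev u @ u @ q) = red (p @ q)"
  using assms(2)
proof (induction u arbitrary: p)
  case (Cons a u)
  have "red (p @ rev (a#u) @ (a#u) @ q) = red ((p @ rev u) @ [a,a] @ (u @ q))" by simp
  also have "\<dots> = red (p @ rev u @ u @ q)" by (simp only: red_cancel) simp
  finally show ?case using Cons by simp
qed simp

lemma inv_rev:
  assumes "rd x" "rd y" "red (x@y) = []"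
  shows "y = rev x"
  using assms
proof (induction x arbitrary: y rule: rev_induct)
  case Nil thus ?case by (simp add: red_rd)
next
  case (snoc a x')
  have rx: "rd x'" using snoc.prems by (simp add: rd_append)
  have "red (x' @ [a] @ y) = red (x' @ red (a#y))" using red_append[of x' "a#y"] by simp
  also have "red (a#y) = cons' a y" by (simp add: red_rd snoc.prems)
  finally have e: "red (x' @ cons' a y) = []" using snoc.prems by simp
  show ?case
  proof (cases "y \<noteq> [] \<and> hd y = a")
    case True
    then obtain y' where y: "y = a#y'" by (cases y) auto
    have "rd y'" using snoc.prems y by (simp add: rd_Cons)
    moreover have "red (x' @ y') = []" using e y by simp
    ultimately have "y' = rev x'" using snoc.IH rx by blast
    thus ?thesis using y by simp
  next
    case False
    hence c: "cons' a y = a#y" by (cases y) auto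
    have "rd (a#y)" using False snoc.prems by (auto simp: rd_Cons)
    hence "a#y = rev x'" using snoc.IH rx e c by auto
    hence "x' = rev y @ [a]" by (metis rev.simps(2) rev_rev_ident)
    hence "\<not> rd (x' @ [a])" by (simp add: rd_append)
    thus ?thesis using snoc.prems by simp
  qed
qed

lemma palin:
  assumes "rd x" "rev x = x" "x \<noteq> []"
  shows "\<exists>u a. x = u @ a # rev u"
proof -
  define k where "k = length x div 2"
  define u where "u = take k x"
  define v where "v = drop k x"
  have x: "x = u @ v" by (simp add: u_def v_def)
  have lu: "length u = k" by (simp add: u_def k_def)
  show ?thesis
  proof (cases "even (length x)")
    case True
    hence lv: "length v = k" by (auto simp: v_def k_def)
    have "rev v @ rev u = u @ v" using assms(2) x by simp
    hence ru: "rev v = u" using append_eq_append_conv[of "rev v" u "rev u" v] lu lv by auto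
    hence "v = rev u" by (metis rev_rev_ident)
    hence "x = u @ rev u" using x by simp
    moreover have "u \<noteq> []" using assms(3) x ru by auto
    ultimately have "\<not> rd x" by (simp add: rd_append hd_rev)
    thus ?thesis using assms by simp
  next
    case False
    hence lv: "length v = Suc k" by (auto simp: v_def k_def elim!: oddE)
    then obtain a v' where v: "v = a # v'" by (cases v) auto
    have "rev v' @ a # rev u = u @ a # v'" using assms(2) x v by simp
    hence "rev v' = u" using append_eq_append_conv[of "rev v'" u "a # rev u" "a # v'"] lu lv v by auto
    thus ?thesis using x v by (metis rev_rev_ident)
  qed
qed

lemma rd_prefix: "rd (A@B) \<Longrightarrow> rd A" by (simp add: rd_append)
lemma rd_suffix: "rd (A@B) \<Longrightarrow> rd B" by (simp add: rd_append)

lemma diverge: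
  assumes "\<not> prefix x y" "\<not> prefix y x"
  shows "\<exists>p b s d t. x = p@b#s \<and> y = p@d#t \<and> b \<noteq> d"
  using assms
proof (induction x arbitrary: y)
  case Nil thus ?case by simp
next
  case (Cons a x)
  then obtain c y' where y: "y = c#y'" by (cases y) auto
  show ?case
  proof (cases "a = c")
    case True
    hence "\<not> prefix x y'" "\<not> prefix y' x" using Cons.prems y by auto
    then obtain p b s d t where "x = p@b#s" "y' = p@d#t" "b \<noteq> d" using Cons.IH by blast
    thus ?thesis using y True by (intro exI[of _ "a#p"]) auto
  next
    case False thus ?thesis using y by (intro exI[of _ "[]"]) auto
  qed
qed



lemma carrier_W: "carrier (W n) = carrier (pres_group (W_gens n) (W_rels n))"
  by (simp add: W_def)

lemma W_group: "group (W n)"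
  unfolding W_def by (rule pres_group_group) (auto simp: W_rels_def W_gens_def)

lemma cl_carrier: "set w \<subseteq> W_gens n \<Longrightarrow> cl n w \<in> carrier (W n)"
  by (simp add: carrier_W pcls_in_carrier)

lemma W_carrierE:
  assumes "A \<in> carrier (W n)"
  obtains w where "set w \<subseteq> W_gens n" "A = cl n w"
  using assms carrier_pres_groupE[of A "W_gens n" "W_rels n"] by (auto simp: carrier_W)

lemma W_mult: "set u \<subseteq> W_gens n \<Longrightarrow> set v \<subseteq> W_gens n \<Longrightarrow> cl n u \<otimes>\<^bsub>W n\<^esub> cl n v = cl n (u@v)"
  by (simp add: W_def mult_pres_group)

lemma W_one: "\<one>\<^bsub>W n\<^esub> = cl n []"
  by (simp add: W_def one_pres_group)

definition good :: "nat \<Rightarrow> (nat \<Rightarrow> nat list) \<Rightarrow> bool" where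
  "good n f \<longleftrightarrow> (\<forall>k\<in>W_gens n. set (f k) \<subseteq> W_gens n \<and> red (f k @ f k) = [])"

lemma good_set: "good n f \<Longrightarrow> set w \<subseteq> W_gens n \<Longrightarrow> set (concat (map f w)) \<subseteq> W_gens n"
  by (auto simp: good_def)

lemma cmap_cong:
  assumes "good n f"
  shows "(u,v) \<in> EW n \<Longrightarrow> (concat (map f u), concat (map f v)) \<in> EW n"
proof (induction rule: pres_eq.induct)
  case (refl w) thus ?case using good_set[OF assms, of w] by (intro pres_eq.refl) auto
next
  case (sym u v) show ?case by (rule pres_eq.sym[OF sym.IH])
next
  case (trans u v w) show ?case by (rule pres_eq.trans[OF trans.IH])
next
  case (rel u v r)
  then obtain k where k: "k \<in> W_gens n" "r = [k,k]" by (auto simp: W_rels_def W_gens_def)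
  have "(f k @ f k, []) \<in> EW n" using assms k by (simp add: good_def EW_iff)
  moreover have "(concat (map f u), concat (map f u)) \<in> EW n" "(concat (map f v), concat (map f v)) \<in> EW n"
    using pres_eq.refl[OF good_set[OF assms rel.hyps(1)]] pres_eq.refl[OF good_set[OF assms rel.hyps(2)]] by auto
  ultimately have "(concat (map f u) @ (f k @ f k) @ concat (map f v), concat (map f u) @ [] @ concat (map f v)) \<in> EW n"
    by (intro pres_eq_append)
  thus ?case using k by simp
qed

lemma W_subst_cl:
  assumes "good n f" "set w \<subseteq> W_gens n"
  shows "W_subst n f (cl n w) = cl n (concat (map f w))"
proof -
  have "cl n (concat (map f w')) = cl n (concat (map f w))" if "w' \<in> cl n w" for w'
  proof -
    have "(w, w') \<in> EW n" using that by (simp add: pcls_mem)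
    hence "(concat (map f w), concat (map f w')) \<in> EW n" by (rule cmap_cong[OF assms(1)])
    thus ?thesis using pcls_eq_iff good_set[OF assms] by metis
  qed
  moreover have "w \<in> cl n w" using assms by (simp add: pcls_self)
  ultimately have "{cl n (concat (map f w')) | w'. w' \<in> cl n w} = {cl n (concat (map f w))}" by blast
  thus ?thesis using cl_carrier[OF assms(2)] by (simp add: W_subst_def)
qed

lemma W_subst_closed:
  assumes "good n f" "A \<in> carrier (W n)" shows "W_subst n f A \<in> carrier (W n)"
proof -
  obtain w where w: "set w \<subseteq> W_gens n" "A = cl n w" using assms(2) by (auto elim!: W_carrierE)
  have "set (concat (map f w)) \<subseteq> W_gens n" by (rule good_set[OF assms(1) w(1)])
  thus ?thesis using w assms by (simp add: W_subst_cl cl_carrier)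
qed

lemma W_subst_hom: "good n f \<Longrightarrow> W_subst n f \<in> hom (W n) (W n)"
proof (rule homI)
  fix x y assume g: "good n f" and "x \<in> carrier (W n)" "y \<in> carrier (W n)"
  then obtain u v where "set u \<subseteq> W_gens n" "x = cl n u" "set v \<subseteq> W_gens n" "y = cl n v"
    by (auto elim!: W_carrierE)
  thus "W_subst n f (x \<otimes>\<^bsub>W n\<^esub> y) = W_subst n f x \<otimes>\<^bsub>W n\<^esub> W_subst n f y"
    using g good_set[OF g, of u] good_set[OF g, of v] by (simp add: W_mult W_subst_cl)
qed (rule W_subst_closed)

lemma W_subst_ext: "W_subst n f \<in> extensional (carrier (W n))"
  by (simp add: W_subst_def)

lemma W_subst_restrict:
  assumes "\<forall>k\<in>W_gens n. f k = f' k"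
  shows "W_subst n f = W_subst n f'"
proof -
  have "concat (map f w) = concat (map f' w)" if "A \<in> carrier (W n)" "w \<in> A" for A w
  proof -
    have "set w \<subseteq> W_gens n" using that carrier_subset_lists[of A "W_gens n" "W_rels n" w]
      by (simp add: carrier_W)
    thus ?thesis using assms by (metis (mono_tags, lifting) map_eq_conv subsetD)
  qed
  thus ?thesis unfolding W_subst_def by (intro restrict_ext) (metis (no_types, lifting))
qed

lemma cmap_cong2:
  assumes "\<forall>k\<in>set w. (f k, f' k) \<in> EW n"
  shows "(concat (map f w), concat (map f' w)) \<in> EW n"
  using assms by (induction w) (auto intro: pres_eq_append pres_eq.refl)

lemma W_subst_cong:
  assumes "good n f" "\<forall>k\<in>W_gens n. set (f' k) \<subseteq> W_gens n \<and> red (f k) = red (f' k)"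
  shows "W_subst n f = W_subst n f'" "good n f'"
proof -
  have e: "\<forall>k\<in>W_gens n. (f k, f' k) \<in> EW n" using assms by (auto simp: good_def EW_iff)
  show g': "good n f'" unfolding good_def
  proof
    fix k assume k: "k \<in> W_gens n"
    have "(f' k @ f' k, f k @ f k) \<in> EW n" using e k by (auto intro: pres_eq_append pres_eq.sym)
    thus "set (f' k) \<subseteq> W_gens n \<and> red (f' k @ f' k) = []"
      using assms k by (auto simp: good_def dest: EW_red)
  qed
  show "W_subst n f = W_subst n f'"
  proof (rule extensionalityI[OF W_subst_ext W_subst_ext])
    fix A assume "A \<in> carrier (W n)"
    then obtain w where w: "set w \<subseteq> W_gens n" "A = cl n w" by (auto elim!: W_carrierE)
    have "(concat (map f w), concat (map f' w)) \<in> EW n" using e w by (intro cmap_cong2) auto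
    thus "W_subst n f A = W_subst n f' A"
      using w assms(1) g' good_set[OF assms(1) w(1)] by (simp add: W_subst_cl pcls_eq_iff)
  qed
qed

definition csub :: "(nat \<Rightarrow> nat list) \<Rightarrow> (nat \<Rightarrow> nat list) \<Rightarrow> nat \<Rightarrow> nat list" where
  "csub f g = (\<lambda>k. concat (map f (g k)))"

lemma good_csub: assumes "good n f" "good n g" shows "good n (csub f g)"
  unfolding good_def
proof
  fix k assume k: "k \<in> W_gens n"
  have s: "set (csub f g k) \<subseteq> W_gens n" using assms k good_set by (auto simp: good_def csub_def)
  have "(g k @ g k, []) \<in> EW n" using assms(2) k by (simp add: good_def EW_iff)
  hence "(concat (map f (g k @ g k)), []) \<in> EW n" using cmap_cong[OF assms(1)] by fastforce
  thus "set (csub f g k) \<subseteq> W_gens n \<and> red (csub f g k @ csub f g k) = []"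
    using s by (auto simp: csub_def dest: EW_red)
qed

lemma W_subst_compose:
  assumes "good n f" "good n g"
  shows "compose (carrier (W n)) (W_subst n f) (W_subst n g) = W_subst n (csub f g)"
proof (rule extensionalityI[OF _ W_subst_ext])
  show "compose (carrier (W n)) (W_subst n f) (W_subst n g) \<in> extensional (carrier (W n))"
    by (simp add: compose_extensional)
  fix A assume "A \<in> carrier (W n)"
  then obtain w where w: "set w \<subseteq> W_gens n" "A = cl n w" by (auto elim!: W_carrierE)
  have "concat (map f (concat (map g w))) = concat (map (csub f g) w)"
    by (induction w) (auto simp: csub_def)
  thus "compose (carrier (W n)) (W_subst n f) (W_subst n g) A = W_subst n (csub f g) A"
    using w assms good_csub[OF assms] cl_carrier good_set[OF assms(2) w(1)]
    by (simp add: compose_def W_subst_cl)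
qed

lemma W_subst_id: "W_subst n (\<lambda>k. [k]) = (\<lambda>A\<in>carrier (W n). A)"
proof (rule extensionalityI[OF W_subst_ext])
  have g: "good n (\<lambda>k. [k])" by (auto simp: good_def)
  show "(\<lambda>A\<in>carrier (W n). A) \<in> extensional (carrier (W n))" by simp
  fix A assume "A \<in> carrier (W n)"
  then obtain w where w: "set w \<subseteq> W_gens n" "A = cl n w" by (auto elim!: W_carrierE)
  have "concat (map (\<lambda>k. [k]) w) = w" by (induction w) auto
  thus "W_subst n (\<lambda>k. [k]) A = (\<lambda>A\<in>carrier (W n). A) A" using w g cl_carrier
    by (simp add: W_subst_cl)
qed

lemma W_subst_auto:
  assumes "good n f" "\<forall>k\<in>W_gens n. red (csub f f k) = [k]"
  shows "W_subst n f \<in> auto (W n)"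
proof -
  have "W_subst n (csub f f) = W_subst n (\<lambda>k. [k])"
    using W_subst_cong(1)[OF good_csub[OF assms(1) assms(1)], of "\<lambda>k. [k]"] assms
    by (auto simp: red_rd)
  hence c: "compose (carrier (W n)) (W_subst n f) (W_subst n f) = (\<lambda>A\<in>carrier (W n). A)"
    by (simp add: W_subst_compose assms W_subst_id)
  have inv: "W_subst n f (W_subst n f A) = A" if "A \<in> carrier (W n)" for A
    using fun_cong[OF c, of A] that by (simp add: compose_def)
  have "bij_betw (W_subst n f) (carrier (W n)) (carrier (W n))"
    by (rule bij_betw_byWitness[where f' = "W_subst n f"]) (use inv W_subst_closed[OF assms(1)] in auto)
  thus ?thesis using W_subst_hom[OF assms(1)] W_subst_ext
    by (simp add: auto_def Bij_def)
qed

lemma AutoGroup_carrier: "carrier (AutoGroup GG) = auto GG"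
  by (simp add: AutoGroup_def BijGroup_def)

lemma AutoGroup_mult: "x \<in> auto GG \<Longrightarrow> y \<in> auto GG \<Longrightarrow> x \<otimes>\<^bsub>AutoGroup GG\<^esub> y = compose (carrier GG) x y"
  by (simp add: AutoGroup_def BijGroup_def auto_def)

lemma AutoGroup_one: "\<one>\<^bsub>AutoGroup GG\<^esub> = (\<lambda>x\<in>carrier GG. x)"
  by (simp add: AutoGroup_def BijGroup_def)

lemma AG_group: "group (AutoGroup (W n))"
  by (rule group.AutoGroup[OF W_group])

lemma W_subst_mult:
  assumes "good n f" "good n g" "W_subst n f \<in> auto (W n)" "W_subst n g \<in> auto (W n)"
  shows "W_subst n f \<otimes>\<^bsub>AutoGroup (W n)\<^esub> W_subst n g = W_subst n (csub f g)"
  using assms by (simp add: AutoGroup_mult W_subst_compose)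

lemma AG_one: "\<one>\<^bsub>AutoGroup (W n)\<^esub> = W_subst n (\<lambda>k. [k])"
  by (simp add: AutoGroup_one W_subst_id)



lemma red_cons'_append: "red (cons' a x @ v) = cons' a (red (x @ v))"
proof (cases x)
  case (Cons b y)
  show ?thesis
  proof (cases "a = b")
    case True thus ?thesis using Cons by (simp add: cons'_cons' rd_red)
  qed (use Cons in simp)
qed simp

lemma red_append_left: "red (red u @ v) = red (u @ v)"
  by (induction u) (auto simp: red_cons'_append)

lemma AG_closed: "x \<in> auto (W n) \<Longrightarrow> y \<in> auto (W n) \<Longrightarrow> x \<otimes>\<^bsub>AutoGroup (W n)\<^esub> y \<in> auto (W n)"
  using monoid.m_closed[OF group.is_monoid[OF AG_group]] by (metis AutoGroup_carrier)

definition \<sigma>s :: "nat \<Rightarrow> nat \<Rightarrow> nat \<Rightarrow> nat list" where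
  "\<sigma>s a b = (\<lambda>k. if k = b then [a,b,a] else [k])"
definition \<alpha>s :: "(nat \<Rightarrow> nat) \<Rightarrow> nat \<Rightarrow> nat list" where
  "\<alpha>s p = (\<lambda>k. [p k])"

lemma sigma_eq: "sigma n a b = W_subst n (\<sigma>s a b)"
  by (simp add: sigma_def \<sigma>s_def)
lemma alpha_eq: "alpha n p = W_subst n (\<alpha>s p)"
  by (simp add: alpha_def \<alpha>s_def)

lemma good_\<sigma>: "a \<in> W_gens n \<Longrightarrow> b \<in> W_gens n \<Longrightarrow> good n (\<sigma>s a b)"
  by (auto simp: good_def \<sigma>s_def)

lemma good_\<alpha>: "\<forall>k\<in>W_gens n. p k \<in> W_gens n \<Longrightarrow> good n (\<alpha>s p)"
  by (auto simp: good_def \<alpha>s_def)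

lemma sigma_auto: "a \<in> W_gens n \<Longrightarrow> b \<in> W_gens n \<Longrightarrow> a \<noteq> b \<Longrightarrow> sigma n a b \<in> auto (W n)"
  unfolding sigma_eq
  by (rule W_subst_auto[OF good_\<sigma>]) (auto simp: csub_def \<sigma>s_def)

lemma transpose_gens: "c \<in> W_gens n \<Longrightarrow> d \<in> W_gens n \<Longrightarrow> k \<in> W_gens n \<Longrightarrow> transpose c d k \<in> W_gens n"
  by (auto simp: transpose_def)

lemma alpha_transpose_auto:
  assumes "c \<in> W_gens n" "d \<in> W_gens n"
  shows "alpha n (transpose c d) \<in> auto (W n)"
  unfolding alpha_eq
  by (rule W_subst_auto[OF good_\<alpha>]) (use assms transpose_gens in \<open>auto simp: csub_def \<alpha>s_def\<close>)

lemma alpha_mult: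
  assumes "\<forall>k\<in>W_gens n. p k \<in> W_gens n" "\<forall>k\<in>W_gens n. q k \<in> W_gens n"
    "alpha n p \<in> auto (W n)" "alpha n q \<in> auto (W n)"
  shows "alpha n p \<otimes>\<^bsub>AutoGroup (W n)\<^esub> alpha n q = alpha n (p \<circ> q)"
proof -
  have "csub (\<alpha>s p) (\<alpha>s q) = \<alpha>s (p \<circ> q)" by (auto simp: csub_def \<alpha>s_def)
  thus ?thesis using assms unfolding alpha_eq by (simp add: W_subst_mult good_\<alpha>)
qed

lemma sigma_conj:
  assumes "c \<in> W_gens n" "d \<in> W_gens n" "a \<in> W_gens n" "b \<in> W_gens n" "a \<noteq> b"
  shows "alpha n (transpose c d) \<otimes>\<^bsub>AutoGroup (W n)\<^esub> sigma n a b \<otimes>\<^bsub>AutoGroup (W n)\<^esub> alpha n (transpose c d)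
         = sigma n (transpose c d a) (transpose c d b)"
proof -
  let ?t = "transpose c d"
  have gt: "\<forall>k\<in>W_gens n. ?t k \<in> W_gens n" using assms transpose_gens by auto
  have gs: "good n (\<sigma>s a b)" using assms by (rule_tac good_\<sigma>)
  have ga: "good n (\<alpha>s ?t)" using gt by (rule good_\<alpha>)
  have at: "W_subst n (\<alpha>s ?t) \<in> auto (W n)" using alpha_transpose_auto[OF assms(1,2)] by (simp add: alpha_eq)
  have as: "W_subst n (\<sigma>s a b) \<in> auto (W n)" using sigma_auto[OF assms(3-5)] by (simp add: sigma_eq)
  have m1: "W_subst n (\<alpha>s ?t) \<otimes>\<^bsub>AutoGroup (W n)\<^esub> W_subst n (\<sigma>s a b) = W_subst n (csub (\<alpha>s ?t) (\<sigma>s a b))"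
    using ga gs at as by (rule W_subst_mult)
  have gc: "good n (csub (\<alpha>s ?t) (\<sigma>s a b))" using ga gs by (rule good_csub)
  have ac: "W_subst n (csub (\<alpha>s ?t) (\<sigma>s a b)) \<in> auto (W n)"
    using m1 at as AG_closed by metis
  have m2: "W_subst n (csub (\<alpha>s ?t) (\<sigma>s a b)) \<otimes>\<^bsub>AutoGroup (W n)\<^esub> W_subst n (\<alpha>s ?t)
      = W_subst n (csub (csub (\<alpha>s ?t) (\<sigma>s a b)) (\<alpha>s ?t))"
    using gc ga ac at by (rule W_subst_mult)
  have "csub (csub (\<alpha>s ?t) (\<sigma>s a b)) (\<alpha>s ?t) = \<sigma>s (?t a) (?t b)"
    by (rule ext) (auto simp: csub_def \<alpha>s_def \<sigma>s_def transpose_def)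
  thus ?thesis using m1 m2 by (simp add: alpha_eq sigma_eq)
qed

lemma sigma_sq:
  assumes "a \<in> W_gens n" "b \<in> W_gens n" "a \<noteq> b"
  shows "sigma n a b \<otimes>\<^bsub>AutoGroup (W n)\<^esub> sigma n a b = \<one>\<^bsub>AutoGroup (W n)\<^esub>"
proof -
  have gs: "good n (\<sigma>s a b)" using assms by (rule_tac good_\<sigma>)
  have as: "W_subst n (\<sigma>s a b) \<in> auto (W n)" using sigma_auto[OF assms] by (simp add: sigma_eq)
  have "W_subst n (csub (\<sigma>s a b) (\<sigma>s a b)) = W_subst n (\<lambda>k. [k])"
    by (rule W_subst_cong(1)[OF good_csub[OF gs gs]]) (use assms in \<open>auto simp: csub_def \<sigma>s_def\<close>)
  thus ?thesis using W_subst_mult[OF gs gs as as] by (simp add: sigma_eq AG_one)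
qed



lemma prodlem:
  assumes fU: "\<forall>k\<in>W_gens n. f k = U k @ A k # rev (U k)"
    and frd: "\<forall>k\<in>W_gens n. rd (f k)"
    and fs: "\<forall>k\<in>W_gens n. set (f k) \<subseteq> W_gens n"
    and np: "\<forall>i\<in>W_gens n. \<forall>j\<in>W_gens n. i \<noteq> j \<longrightarrow> \<not> prefix (U i @ [A i]) (U j @ [A j])"
  shows "rd w \<Longrightarrow> w \<noteq> [] \<Longrightarrow> set w \<subseteq> W_gens n \<Longrightarrow>
    \<exists>Q. red (concat (map f w)) = Q @ rev (U (last w) @ [A (last w)]) \<and> length w \<le> length Q + 1"
proof (induction w rule: rev_induct)
  case Nil thus ?case by simp
next
  case (snoc j w0)
  have j: "j \<in> W_gens n" using snoc.prems by simp
  have fj: "f j = U j @ rev (U j @ [A j])" using fU j by simp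
  show ?case
  proof (cases "w0 = []")
    case True
    have r: "red (f j) = f j" using frd j red_rd by blast
    have "red (concat (map f (w0 @ [j]))) = red (f j)" using True by simp
    hence "red (concat (map f (w0 @ [j]))) = U j @ rev (U (last (w0 @ [j])) @ [A (last (w0 @ [j]))])"
      using r fj by simp
    thus ?thesis using True by (intro exI[of _ "U j"]) simp
  next
    case False
    define i where "i = last w0"
    have i: "i \<in> W_gens n" using False snoc.prems by (auto simp: i_def)
    have rw0: "rd w0" using snoc.prems by (simp add: rd_append)
    have ij: "i \<noteq> j" using snoc.prems False by (auto simp: rd_append i_def)
    obtain Q where Q: "red (concat (map f w0)) = Q @ rev (U i @ [A i])" "length w0 \<le> length Q + 1"
      using snoc.IH[OF rw0 False] snoc.prems by (auto simp: i_def)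
    have n1: "\<not> prefix (U i @ [A i]) (U j @ [A j])" "\<not> prefix (U j @ [A j]) (U i @ [A i])"
      using np i j ij by auto
    obtain p b s d t where pb: "U i @ [A i] = p@b#s" "U j @ [A j] = p@d#t" "b \<noteq> d"
      using diverge[OF n1] by blast
    have sQ: "set Q \<subseteq> W_gens n"
    proof -
      have "set (concat (map f w0)) \<subseteq> W_gens n" using fs snoc.prems by auto
      hence "set (red (concat (map f w0))) \<subseteq> W_gens n"
        using set_red by (rule subset_trans[rotated])
      thus ?thesis using Q by simp
    qed
    have fi2: "f i = (U i @ [A i]) @ rev (U i)" using fU i by simp
    have "set (f i) \<subseteq> W_gens n" using fs i by blast
    hence "set (p @ b # s) \<subseteq> W_gens n" unfolding fi2 pb(1) by simp
    hence sp: "set p \<subseteq> W_gens n" "set s \<subseteq> W_gens n" "b \<in> W_gens n" by auto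
    have fj1: "f j = (U j @ [A j]) @ rev (U j)" using fU j by simp
    hence fj2: "f j = p @ d # t @ rev (U j)" unfolding pb(2) by simp
    have "set (f j) \<subseteq> W_gens n" using fs j by blast
    hence stU: "set (d # t @ rev (U j)) \<subseteq> W_gens n" unfolding fj2 by simp
    have "red (concat (map f (w0 @ [j]))) = red (red (concat (map f w0)) @ f j)"
      by (simp add: red_append_left)
    also have "\<dots> = red ((Q @ rev s @ [b]) @ rev p @ p @ (d # t @ rev (U j)))"
      using Q(1) pb(1) fj2 by simp
    also have "\<dots> = red ((Q @ rev s @ [b]) @ (d # t @ rev (U j)))"
      by (rule rev_app_cancel) (use sQ sp stU in auto)
    also have "\<dots> = (Q @ rev s @ [b]) @ (d # t @ rev (U j))"
    proof (rule red_rd)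
      have "rd (Q @ rev (U i @ [A i]))" using Q(1) rd_red by metis
      moreover have "Q @ rev (U i @ [A i]) = (Q @ rev s @ [b]) @ rev p" using pb(1) by simp
      ultimately have r1: "rd (Q @ rev s @ [b])" by (metis rd_prefix)
      have "rd (f j)" using frd j by simp
      hence r2: "rd (d # t @ rev (U j))" using fj2 by (metis rd_suffix)
      show "rd ((Q @ rev s @ [b]) @ (d # t @ rev (U j)))"
        using r1 r2 pb(3) by (subst rd_append) auto
    qed
    also have "d # t @ rev (U j) = drop (length p) (U j) @ rev (U j @ [A j])"
    proof -
      have "length p \<le> length (U j)" using arg_cong[OF pb(2), of length] by simp
      hence "drop (length p) (f j) = drop (length p) (U j) @ rev (U j @ [A j])"
        using fj by simp
      thus ?thesis using fj2 by simp
    qed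
    finally show ?thesis using Q(2)
      by (intro exI[of _ "Q @ rev s @ [b] @ drop (length p) (U j)"]) simp
  qed
qed

lemma shorten:
  assumes "set U \<subseteq> W_gens n" "set w \<subseteq> W_gens n" "a \<in> W_gens n" "b \<in> W_gens n"
  shows "red ((U @ a # rev U) @ (U @ a # w @ b # rev w @ a # rev U) @ (U @ a # rev U))
       = red (U @ w @ b # rev w @ rev U)"
proof -
  have "red ((U @ a # rev U) @ (U @ a # w @ b # rev w @ a # rev U) @ (U @ a # rev U))
     = red ((U @ [a]) @ rev U @ U @ (a # w @ b # rev w @ a # rev U @ U @ a # rev U))" by simp
  also have "\<dots> = red ((U @ [a]) @ (a # w @ b # rev w @ a # rev U @ U @ a # rev U))"
    by (rule rev_app_cancel) (use assms in auto)
  also have "\<dots> = red (U @ [a,a] @ (w @ b # rev w @ a # rev U @ U @ a # rev U))" by simp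
  also have "\<dots> = red (U @ (w @ b # rev w @ a # rev U @ U @ a # rev U))" by (rule red_cancel)
  also have "\<dots> = red ((U @ w @ b # rev w @ [a]) @ rev U @ U @ (a # rev U))" by simp
  also have "\<dots> = red ((U @ w @ b # rev w @ [a]) @ (a # rev U))"
    by (rule rev_app_cancel) (use assms in auto)
  also have "\<dots> = red ((U @ w @ b # rev w) @ [a,a] @ rev U)" by simp
  also have "\<dots> = red ((U @ w @ b # rev w) @ rev U)" by (rule red_cancel)
  finally show ?thesis by simp
qed



lemma finite_gens: "finite (W_gens n)" by (simp add: W_gens_def)

lemma red_single: "red [k] = [k]" by simp

lemma auto_is_W_subst:
  assumes "\<phi> \<in> auto (W n)"
  shows "\<exists>f. good n f \<and> (\<forall>k\<in>W_gens n. rd (f k)) \<and> \<phi> = W_subst n f"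
proof -
  have hom: "\<phi> \<in> hom (W n) (W n)" and bij: "\<phi> \<in> Bij (carrier (W n))"
    using assms by (auto simp: auto_def)
  have gh: "group_hom (W n) (W n) \<phi>"
    using hom W_group by (simp add: group_hom_def group_hom_axioms_def)
  define f where "f k = red (SOME w. w \<in> \<phi> (cl n [k]))" for k
  have fk: "\<phi> (cl n [k]) = cl n (f k) \<and> set (f k) \<subseteq> W_gens n" if "k \<in> W_gens n" for k
  proof -
    have "\<phi> (cl n [k]) \<in> carrier (W n)" using hom cl_carrier[of "[k]" n] that by (auto simp: hom_def)
    then obtain w where w: "set w \<subseteq> W_gens n" "\<phi> (cl n [k]) = cl n w" by (auto elim: W_carrierE)
    let ?x = "SOME x. x \<in> cl n w"
    have "w \<in> cl n w" using w by (simp add: pcls_self)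
    hence "?x \<in> cl n w" by (rule someI)
    hence e: "(w, ?x) \<in> EW n" by (simp add: pcls_mem)
    have sx: "set ?x \<subseteq> W_gens n" using pres_eq_lists[OF e] by simp
    have "cl n w = cl n ?x" using e w pcls_eq_iff by metis
    also have "\<dots> = cl n (red ?x)" using sx red_EW pcls_eq_iff by metis
    finally have "\<phi> (cl n [k]) = cl n (f k)" using w by (simp add: f_def)
    moreover have "set (f k) \<subseteq> W_gens n" using sx set_red w by (simp add: f_def) (meson subset_trans)
    ultimately show ?thesis by simp
  qed
  have fr: "\<forall>k\<in>W_gens n. rd (f k)" by (simp add: f_def rd_red)
  have cw: "\<phi> (cl n w) = cl n (concat (map f w))" if "set w \<subseteq> W_gens n" for w
    using that
  proof (induction w)
    case Nil
    have "\<phi> \<one>\<^bsub>W n\<^esub> = \<one>\<^bsub>W n\<^esub>" by (rule group_hom.hom_one[OF gh])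
    thus ?case by (simp add: W_one)
  next
    case (Cons a w)
    have a: "a \<in> W_gens n" "set w \<subseteq> W_gens n" using Cons.prems by auto
    have "cl n (a#w) = cl n [a] \<otimes>\<^bsub>W n\<^esub> cl n w" using a by (simp add: W_mult)
    hence "\<phi> (cl n (a#w)) = \<phi> (cl n [a]) \<otimes>\<^bsub>W n\<^esub> \<phi> (cl n w)"
      using hom a cl_carrier[of "[a]" n] cl_carrier[of w n] by (simp add: hom_mult)
    also have "\<dots> = cl n (f a) \<otimes>\<^bsub>W n\<^esub> cl n (concat (map f w))" using fk a Cons.IH by simp
    also have "\<dots> = cl n (f a @ concat (map f w))"
      using fk[OF a(1)] a(2) fk by (intro W_mult) auto
    finally show ?case by simp
  qed
  have good: "good n f" unfolding good_def
  proof
    fix k assume k: "k \<in> W_gens n"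
    have "cl n [k,k] = cl n []" using k by (subst cl_eq_iff) (auto simp: W_gens_def)
    hence "cl n (concat (map f [k,k])) = cl n []" using cw[of "[k,k]"] cw[of "[]"] k by auto
    hence "red (f k @ f k) = []" using fk[OF k] by (subst (asm) cl_eq_iff) auto
    thus "set (f k) \<subseteq> W_gens n \<and> red (f k @ f k) = []" using fk k by simp
  qed
  have "\<phi> = W_subst n f"
  proof (rule extensionalityI[OF _ W_subst_ext])
    show "\<phi> \<in> extensional (carrier (W n))" using bij by (simp add: Bij_def)
    fix A assume "A \<in> carrier (W n)"
    then obtain w where w: "set w \<subseteq> W_gens n" "A = cl n w" by (auto elim: W_carrierE)
    thus "\<phi> A = W_subst n f A" using cw good by (simp add: W_subst_cl)
  qed
  thus ?thesis using good fr by blast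
qed



lemma main_red:
  assumes Hs: "subgroup Hs (AutoGroup (W n))"
    and sH: "\<And>a b. a \<in> W_gens n \<Longrightarrow> b \<in> W_gens n \<Longrightarrow> a \<noteq> b \<Longrightarrow> sigma n a b \<in> Hs"
    and aH: "\<And>p. p permutes W_gens n \<Longrightarrow> alpha n p \<in> Hs"
  shows "good n f \<Longrightarrow> (\<forall>k\<in>W_gens n. rd (f k)) \<Longrightarrow> W_subst n f \<in> auto (W n) \<Longrightarrow> W_subst n f \<in> Hs"
proof (induction "\<Sum>k\<in>W_gens n. length (f k)" arbitrary: f rule: less_induct)
  case less
  let ?\<phi> = "W_subst n f"
  have gf: "good n f" using less.prems by simp
  have rf: "\<forall>k\<in>W_gens n. rd (f k)" using less.prems by simp
  have fs: "\<forall>k\<in>W_gens n. set (f k) \<subseteq> W_gens n" using gf by (simp add: good_def)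
  have bij: "bij_betw ?\<phi> (carrier (W n)) (carrier (W n))"
    using less.prems by (simp add: auto_def Bij_def)
  have clk: "?\<phi> (cl n [k]) = cl n (f k)" if "k \<in> W_gens n" for k
    using W_subst_cl[OF gf, of "[k]"] that by simp
  have cl0: "?\<phi> (cl n []) = cl n []" using W_subst_cl[OF gf, of "[]"] by simp
  have inj: "inj_on ?\<phi> (carrier (W n))" using bij by (simp add: bij_betw_def)
  have fne: "f k \<noteq> []" if k: "k \<in> W_gens n" for k
  proof
    assume "f k = []"
    hence "?\<phi> (cl n [k]) = ?\<phi> (cl n [])" using clk[OF k] cl0 by simp
    hence "cl n [k] = cl n []" using inj cl_carrier[of "[k]" n] cl_carrier[of "[]" n] k
      by (auto dest: inj_onD)
    thus False using k by (subst (asm) cl_eq_iff) auto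
  qed
  have fdist: "f i \<noteq> f j" if "i \<in> W_gens n" "j \<in> W_gens n" "i \<noteq> j" for i j
  proof
    assume "f i = f j"
    hence "?\<phi> (cl n [i]) = ?\<phi> (cl n [j])" using clk that by simp
    hence "cl n [i] = cl n [j]" using inj cl_carrier[of "[i]" n] cl_carrier[of "[j]" n] that
      by (auto dest: inj_onD)
    thus False using that by (subst (asm) cl_eq_iff) auto
  qed
  have palf: "\<forall>k\<in>W_gens n. \<exists>u a. f k = u @ a # rev u"
  proof
    fix k assume k: "k \<in> W_gens n"
    have "red (f k @ f k) = []" using gf k by (simp add: good_def)
    hence "f k = rev (f k)" using rf k inv_rev by blast
    thus "\<exists>u a. f k = u @ a # rev u" using palin rf k fne[OF k] by metis
  qed
  then obtain U A where UA: "\<forall>k\<in>W_gens n. f k = U k @ A k # rev (U k)" by metis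
  show ?case
  proof (cases "\<exists>i\<in>W_gens n. \<exists>j\<in>W_gens n. i \<noteq> j \<and> prefix (U i @ [A i]) (U j @ [A j])")
    case True
    then obtain i j where ij: "i \<in> W_gens n" "j \<in> W_gens n" "i \<noteq> j" "prefix (U i @ [A i]) (U j @ [A j])"
      by (elim bexE conjE) (rule that)
    obtain w where ew: "U j @ [A j] = U i @ [A i] @ w" using ij(4) by (auto elim: prefixE)
    have fi0: "f i = U i @ A i # rev (U i)" using UA ij(1) by blast
    have fj0: "f j = U j @ A j # rev (U j)" using UA ij(2) by blast
    have "w \<noteq> []"
    proof
      assume "w = []"
      hence "U j = U i \<and> A j = A i" using ew by simp
      hence "f i = f j" using fi0 fj0 by simp
      thus False using fdist[OF ij(1-3)] by simp
    qed
    then obtain w' c where "w = w' @ [c]" by (cases w rule: rev_exhaust) auto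
    hence "U j @ [A j] = (U i @ A i # w') @ [c]" using ew by simp
    hence Uj: "U j = U i @ A i # w'" by simp
    have fi: "f i = U i @ A i # rev (U i)" by (rule fi0)
    have fj: "f j = U i @ A i # w' @ A j # rev w' @ A i # rev (U i)" using fj0 Uj by simp
    have sfj: "set (f j) \<subseteq> W_gens n" using fs ij by simp
    hence sets: "set (U i) \<subseteq> W_gens n" "set w' \<subseteq> W_gens n" "A i \<in> W_gens n" "A j \<in> W_gens n"
      unfolding fj by auto
    define f' where "f' = f(j := red (f i @ f j @ f i))"
    have sh: "red (f i @ f j @ f i) = red (U i @ w' @ A j # rev w' @ rev (U i))"
      unfolding fi fj by (rule shorten[OF sets])
    have "length (f' j) \<le> length (U i @ w' @ A j # rev w' @ rev (U i))"
      using sh length_red[of "U i @ w' @ A j # rev w' @ rev (U i)"] by (simp add: f'_def)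
    also have "\<dots> < length (f j)" unfolding fj by simp
    finally have ltj: "length (f' j) < length (f j)" .
    have sum: "(\<Sum>k\<in>W_gens n. length (f' k)) < (\<Sum>k\<in>W_gens n. length (f k))"
    proof -
      have "(\<Sum>k\<in>W_gens n. length (f' k)) = length (f' j) + (\<Sum>k\<in>W_gens n - {j}. length (f' k))"
        by (rule sum.remove[OF finite_gens ij(2)])
      also have "(\<Sum>k\<in>W_gens n - {j}. length (f' k)) = (\<Sum>k\<in>W_gens n - {j}. length (f k))"
        by (rule sum.cong) (auto simp: f'_def)
      also have "length (f' j) + (\<Sum>k\<in>W_gens n - {j}. length (f k)) < length (f j) + (\<Sum>k\<in>W_gens n - {j}. length (f k))"
        using ltj by simp
      also have "\<dots> = (\<Sum>k\<in>W_gens n. length (f k))"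
        by (rule sum.remove[OF finite_gens ij(2), symmetric])
      finally show ?thesis .
    qed
    have gs: "good n (\<sigma>s i j)" using ij by (rule_tac good_\<sigma>) auto
    have as: "W_subst n (\<sigma>s i j) \<in> auto (W n)" using sigma_auto[OF ij(1-3)] by (simp add: sigma_eq)
    have m1: "?\<phi> \<otimes>\<^bsub>AutoGroup (W n)\<^esub> W_subst n (\<sigma>s i j) = W_subst n (csub f (\<sigma>s i j))"
      using gf gs less.prems(3) as by (rule W_subst_mult)
    have cf: "\<forall>k\<in>W_gens n. set (f' k) \<subseteq> W_gens n \<and> red (csub f (\<sigma>s i j) k) = red (f' k)"
    proof
      fix k assume k: "k \<in> W_gens n"
      show "set (f' k) \<subseteq> W_gens n \<and> red (csub f (\<sigma>s i j) k) = red (f' k)"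
      proof (cases "k = j")
        case True
        have "set (f i @ f j @ f i) \<subseteq> W_gens n" using fs ij by simp
        hence "set (red (f i @ f j @ f i)) \<subseteq> W_gens n" using set_red[of "f i @ f j @ f i"] by blast
        hence "set (f' k) \<subseteq> W_gens n" using True by (simp add: f'_def)
        thus ?thesis using True by (simp add: f'_def csub_def \<sigma>s_def)
      next
        case False thus ?thesis using fs k by (simp add: f'_def csub_def \<sigma>s_def)
      qed
    qed
    have eq': "W_subst n (csub f (\<sigma>s i j)) = W_subst n f'" and gf': "good n f'"
      using W_subst_cong[OF good_csub[OF gf gs] cf] by auto
    have "?\<phi> \<otimes>\<^bsub>AutoGroup (W n)\<^esub> W_subst n (\<sigma>s i j) \<in> auto (W n)"
      by (rule AG_closed[OF less.prems(3) as])
    hence af': "W_subst n f' \<in> auto (W n)" using m1 eq' by simp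
    have rf': "\<forall>k\<in>W_gens n. rd (f' k)" using rf by (simp add: f'_def rd_red)
    have f'H: "W_subst n f' \<in> Hs" using less.hyps[OF sum gf' rf' af'] .
    have "?\<phi> = ?\<phi> \<otimes>\<^bsub>AutoGroup (W n)\<^esub> (sigma n i j \<otimes>\<^bsub>AutoGroup (W n)\<^esub> sigma n i j)"
      using sigma_sq[OF ij(1-3)] less.prems(3) group.is_monoid[OF AG_group]
      by (simp add: monoid.r_one AutoGroup_carrier)
    also have "\<dots> = (?\<phi> \<otimes>\<^bsub>AutoGroup (W n)\<^esub> sigma n i j) \<otimes>\<^bsub>AutoGroup (W n)\<^esub> sigma n i j"
      using group.is_monoid[OF AG_group] less.prems(3) sigma_auto[OF ij(1-3)]
      by (simp add: monoid.m_assoc AutoGroup_carrier)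
    also have "\<dots> = W_subst n f' \<otimes>\<^bsub>AutoGroup (W n)\<^esub> sigma n i j"
      using m1 eq' by (simp add: sigma_eq)
    finally have "?\<phi> = W_subst n f' \<otimes>\<^bsub>AutoGroup (W n)\<^esub> sigma n i j" .
    thus ?thesis using f'H sH[OF ij(1-3)] subgroup.m_closed[OF Hs] by simp
  next
    case False
    hence np: "\<forall>i\<in>W_gens n. \<forall>j\<in>W_gens n. i \<noteq> j \<longrightarrow> \<not> prefix (U i @ [A i]) (U j @ [A j])" by blast
    have surj: "?\<phi> ` carrier (W n) = carrier (W n)" using bij by (simp add: bij_betw_def)
    have gen: "\<exists>i\<in>W_gens n. f i = [k]" if k: "k \<in> W_gens n" for k
    proof -
      have "cl n [k] \<in> ?\<phi> ` carrier (W n)" using surj cl_carrier[of "[k]" n] k by simp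
      then obtain B where B: "B \<in> carrier (W n)" "?\<phi> B = cl n [k]" by blast
      then obtain w0 where w0: "set w0 \<subseteq> W_gens n" "B = cl n w0" by (auto elim: W_carrierE)
      define w where "w = red w0"
      have sw: "set w \<subseteq> W_gens n" using w0 set_red[of w0] by (simp add: w_def)
      have "cl n w = cl n w0" using sw w0 by (simp add: cl_eq_iff w_def)
      hence "cl n (concat (map f w)) = cl n [k]" using B w0 W_subst_cl[OF gf sw] by simp
      hence rk: "red (concat (map f w)) = [k]"
        using good_set[OF gf sw] k by (subst (asm) cl_eq_iff) auto
      have rw: "rd w" by (simp add: w_def rd_red)
      have "w \<noteq> []" using rk by auto
      then obtain Q where Q: "red (concat (map f w)) = Q @ rev (U (last w) @ [A (last w)])"
        "length w \<le> length Q + 1"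
        using prodlem[OF UA rf fs np rw _ sw] by blast
      have "length Q = 0" using arg_cong[OF Q(1), of length] rk by simp
      hence "length w = 1" using Q(2) \<open>w \<noteq> []\<close> by (cases w) auto
      then obtain i where wi: "w = [i]" by (cases w) auto
      have "red (f i) = [k]" using rk wi by simp
      moreover have "red (f i) = f i" using rf sw wi red_rd by simp
      ultimately show ?thesis using sw wi by auto
    qed
    define g where "g k = (SOME i. i \<in> W_gens n \<and> f i = [k])" for k
    have hg: "g k \<in> W_gens n \<and> f (g k) = [k]" if "k \<in> W_gens n" for k
      unfolding g_def by (rule someI_ex) (use gen[OF that] in blast)
    have ig: "inj_on g (W_gens n)"
    proof (rule inj_onI)
      fix x y assume xy: "x \<in> W_gens n" "y \<in> W_gens n" "g x = g y"
      have "[x] = f (g x)" using hg[OF xy(1)] by simp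
      also have "\<dots> = f (g y)" using xy(3) by simp
      also have "\<dots> = [y]" using hg[OF xy(2)] by simp
      finally show "x = y" by simp
    qed
    have "g ` W_gens n \<subseteq> W_gens n" using hg by blast
    hence gimg: "g ` W_gens n = W_gens n"
      using endo_inj_surj[OF finite_gens _ ig] by simp
    define \<pi> where "\<pi> i = (if i \<in> W_gens n then hd (f i) else i)" for i
    have f\<pi>: "f i = [\<pi> i] \<and> \<pi> i \<in> W_gens n" if "i \<in> W_gens n" for i
    proof -
      have "i \<in> g ` W_gens n" using gimg that by simp
      then obtain k where k: "k \<in> W_gens n" "i = g k" by (rule imageE) (rule that, auto)
      have fi: "f i = [k]" using hg[OF k(1)] k(2) by simp
      have "\<pi> i = k" using that fi by (simp add: \<pi>_def)
      thus ?thesis using fi k(1) by simp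
    qed
    have pimg: "\<pi> ` W_gens n = W_gens n"
    proof
      show "\<pi> ` W_gens n \<subseteq> W_gens n" using f\<pi> by blast
      show "W_gens n \<subseteq> \<pi> ` W_gens n"
      proof
        fix k assume k: "k \<in> W_gens n"
        have "[\<pi> (g k)] = [k]" using hg[OF k] f\<pi>[of "g k"] by metis
        hence "\<pi> (g k) = k" by simp
        thus "k \<in> \<pi> ` W_gens n" using hg[OF k] by (metis imageI)
      qed
    qed
    have "inj_on \<pi> (W_gens n)" using finite_surj_inj[OF finite_gens] pimg by simp
    hence "bij_betw \<pi> (W_gens n) (W_gens n)" using pimg by (simp add: bij_betw_def)
    hence perm: "\<pi> permutes W_gens n" by (rule bij_imp_permutes) (simp add: \<pi>_def)
    have "?\<phi> = alpha n \<pi>" unfolding alpha_eq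
      by (rule W_subst_restrict) (simp add: f\<pi> \<alpha>s_def)
    thus ?thesis using aH[OF perm] by simp
  qed
qed



lemma AG_m_assoc:
  "x \<in> auto (W n) \<Longrightarrow> y \<in> auto (W n) \<Longrightarrow> z \<in> auto (W n) \<Longrightarrow>
   x \<otimes>\<^bsub>AutoGroup (W n)\<^esub> y \<otimes>\<^bsub>AutoGroup (W n)\<^esub> z = x \<otimes>\<^bsub>AutoGroup (W n)\<^esub> (y \<otimes>\<^bsub>AutoGroup (W n)\<^esub> z)"
  using monoid.m_assoc[OF group.is_monoid[OF AG_group]] by (metis AutoGroup_carrier)

lemma gens_range: "k \<in> W_gens n \<longleftrightarrow> 1 \<le> k \<and> k \<le> n" by (simp add: W_gens_def)

lemma transpose_step:
  assumes "a < b"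
  shows "transpose a (Suc b) = transpose b (Suc b) \<circ> transpose a b \<circ> transpose b (Suc b)"
  using assms by (auto simp: transpose_def fun_eq_iff)

lemma alpha_id: "alpha n id = \<one>\<^bsub>AutoGroup (W n)\<^esub>"
  by (simp add: alpha_eq AG_one \<alpha>s_def)

lemma gen_all:
  assumes Hs: "subgroup Hs (AutoGroup (W n))"
    and s12: "sigma n 1 2 \<in> Hs" and n2: "2 \<le> n"
    and adj: "\<And>i. 1 \<le> i \<Longrightarrow> i \<le> n - 1 \<Longrightarrow> alpha n (transpose i (i + 1)) \<in> Hs"
  shows "\<And>p. p permutes W_gens n \<Longrightarrow> alpha n p \<in> Hs"
    and "\<And>a b. a \<in> W_gens n \<Longrightarrow> b \<in> W_gens n \<Longrightarrow> a \<noteq> b \<Longrightarrow> sigma n a b \<in> Hs"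
proof -
  have Hsub: "Hs \<subseteq> auto (W n)" using subgroup.subset[OF Hs] by (simp add: AutoGroup_carrier)
  have tg: "\<forall>k\<in>W_gens n. transpose c d k \<in> W_gens n" if "c \<in> W_gens n" "d \<in> W_gens n" for c d
    using transpose_gens that by blast
  have ab: "alpha n (transpose a (a + Suc d)) \<in> Hs" if "1 \<le> a" "a + Suc d \<le> n" for a d
    using that
  proof (induction d)
    case 0 thus ?case using adj[of a] by simp
  next
    case (Suc d)
    let ?b = "a + Suc d"
    have b: "a \<in> W_gens n" "?b \<in> W_gens n" "Suc ?b \<in> W_gens n" using Suc.prems by (auto simp: gens_range)
    have IH: "alpha n (transpose a ?b) \<in> Hs" using Suc by simp
    have t1: "alpha n (transpose ?b (Suc ?b)) \<in> Hs" using adj[of ?b] Suc.prems by simp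
    have e: "transpose a (a + Suc (Suc d)) = transpose ?b (Suc ?b) \<circ> transpose a ?b \<circ> transpose ?b (Suc ?b)"
      using transpose_step[of a ?b] by simp
    have A1: "alpha n (transpose ?b (Suc ?b)) \<in> auto (W n)" "alpha n (transpose a ?b) \<in> auto (W n)"
      using IH t1 Hsub by auto
    have tg1: "\<forall>k\<in>W_gens n. transpose ?b (Suc ?b) k \<in> W_gens n" by (rule tg[OF b(2) b(3)])
    have tg2: "\<forall>k\<in>W_gens n. transpose a ?b k \<in> W_gens n" by (rule tg[OF b(1) b(2)])
    have m1: "alpha n (transpose ?b (Suc ?b)) \<otimes>\<^bsub>AutoGroup (W n)\<^esub> alpha n (transpose a ?b)
        = alpha n (transpose ?b (Suc ?b) \<circ> transpose a ?b)"
      by (rule alpha_mult[OF tg1 tg2 A1])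
    have tg3: "\<forall>k\<in>W_gens n. (transpose ?b (Suc ?b) \<circ> transpose a ?b) k \<in> W_gens n"
      using tg1 tg2 by simp
    have A3: "alpha n (transpose ?b (Suc ?b) \<circ> transpose a ?b) \<in> auto (W n)"
      using AG_closed[OF A1] unfolding m1 .
    have m2: "alpha n (transpose ?b (Suc ?b) \<circ> transpose a ?b) \<otimes>\<^bsub>AutoGroup (W n)\<^esub> alpha n (transpose ?b (Suc ?b))
        = alpha n (transpose ?b (Suc ?b) \<circ> transpose a ?b \<circ> transpose ?b (Suc ?b))"
      by (rule alpha_mult[OF tg3 tg1 A3 A1(1)])
    have "alpha n (transpose ?b (Suc ?b)) \<otimes>\<^bsub>AutoGroup (W n)\<^esub> alpha n (transpose a ?b) \<otimes>\<^bsub>AutoGroup (W n)\<^esub> alpha n (transpose ?b (Suc ?b)) \<in> Hs"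
      by (intro subgroup.m_closed[OF Hs] IH t1)
    hence "alpha n (transpose ?b (Suc ?b) \<circ> transpose a ?b \<circ> transpose ?b (Suc ?b)) \<in> Hs"
      unfolding m1 m2 .
    thus ?case unfolding e[symmetric] by simp
  qed
  have at: "alpha n (transpose a b) \<in> Hs" if "a \<in> W_gens n" "b \<in> W_gens n" for a b
  proof -
    consider "a = b" | "a < b" | "b < a" by linarith
    thus ?thesis
    proof cases
      case 1
      hence "transpose a b = id" by (simp add: transpose_def fun_eq_iff)
      thus ?thesis using alpha_id subgroup.one_closed[OF Hs] by simp
    next
      case 2
      then obtain d where "b = Suc (a + d)" using less_imp_Suc_add by blast
      hence d: "b = a + Suc d" by simp
      have "1 \<le> a" "a + Suc d \<le> n" using that d by (auto simp: gens_range)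
      from ab[OF this] show ?thesis using d by simp
    next
      case 3
      then obtain d where "a = Suc (b + d)" using less_imp_Suc_add by blast
      hence d: "a = b + Suc d" by simp
      have "1 \<le> b" "b + Suc d \<le> n" using that d by (auto simp: gens_range)
      from ab[OF this] show ?thesis using d by (simp add: transpose_commute)
    qed
  qed
  show ap: "alpha n p \<in> Hs" if "p permutes W_gens n" for p
    using that finite_gens
  proof (induction rule: permutes_induct)
    case id show ?case using alpha_id[of n] subgroup.one_closed[OF Hs] by (simp only:)
  next
    case (swap a b p)
    have pg: "\<forall>k\<in>W_gens n. p k \<in> W_gens n" using swap.hyps(4) by (simp add: permutes_in_image)
    have "alpha n (transpose a b) \<otimes>\<^bsub>AutoGroup (W n)\<^esub> alpha n p = alpha n (transpose a b \<circ> p)"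
      using alpha_mult[OF tg[OF swap.hyps(1,2)] pg] at[OF swap.hyps(1,2)] swap.IH Hsub by blast
    moreover have "alpha n (transpose a b) \<otimes>\<^bsub>AutoGroup (W n)\<^esub> alpha n p \<in> Hs"
      by (rule subgroup.m_closed[OF Hs at[OF swap.hyps(1,2)] swap.IH])
    ultimately show ?case by (simp only:)
  qed
  have g12: "1 \<in> W_gens n" "2 \<in> W_gens n" using n2 by (auto simp: gens_range)
  have s1b: "sigma n 1 b \<in> Hs" if "b \<in> W_gens n" "b \<noteq> 1" for b
  proof -
    have "alpha n (transpose 2 b) \<otimes>\<^bsub>AutoGroup (W n)\<^esub> sigma n 1 2 \<otimes>\<^bsub>AutoGroup (W n)\<^esub> alpha n (transpose 2 b)
         = sigma n (transpose 2 b 1) (transpose 2 b 2)"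
      by (rule sigma_conj[OF g12(2) that(1) g12(1) g12(2)]) simp
    moreover have "transpose 2 b 1 = 1" "transpose 2 b 2 = b" using that by (auto simp: transpose_def)
    moreover have "alpha n (transpose 2 b) \<otimes>\<^bsub>AutoGroup (W n)\<^esub> sigma n 1 2 \<otimes>\<^bsub>AutoGroup (W n)\<^esub> alpha n (transpose 2 b) \<in> Hs"
      by (intro subgroup.m_closed[OF Hs] at[OF g12(2) that(1)] s12)
    ultimately show ?thesis by simp
  qed
  show "sigma n a b \<in> Hs" if "a \<in> W_gens n" "b \<in> W_gens n" "a \<noteq> b" for a b
  proof (cases "a = 1")
    case True thus ?thesis using s1b that by simp
  next
    case False
    let ?b = "transpose 1 a b"
    have b': "?b \<in> W_gens n" "?b \<noteq> 1"
      using transpose_gens[OF g12(1) that(1) that(2)] apply simp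
      using that False by (simp add: transpose_def)
    have "alpha n (transpose 1 a) \<otimes>\<^bsub>AutoGroup (W n)\<^esub> sigma n 1 ?b \<otimes>\<^bsub>AutoGroup (W n)\<^esub> alpha n (transpose 1 a)
         = sigma n (transpose 1 a 1) (transpose 1 a ?b)"
      by (rule sigma_conj[OF g12(1) that(1) g12(1) b'(1) b'(2)[symmetric]])
    moreover have "transpose 1 a 1 = a" "transpose 1 a ?b = b" by (auto simp: transpose_def)
    moreover have "alpha n (transpose 1 a) \<otimes>\<^bsub>AutoGroup (W n)\<^esub> sigma n 1 ?b \<otimes>\<^bsub>AutoGroup (W n)\<^esub> alpha n (transpose 1 a) \<in> Hs"
      by (intro subgroup.m_closed[OF Hs] at[OF g12(1) that(1)] s1b[OF b'])
    ultimately show ?thesis by simp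
  qed
qed

lemma auto_sub:
  assumes Hs: "subgroup Hs (AutoGroup (W n))"
    and s12: "sigma n 1 2 \<in> Hs" and n2: "2 \<le> n"
    and adj: "\<And>i. 1 \<le> i \<Longrightarrow> i \<le> n - 1 \<Longrightarrow> alpha n (transpose i (i + 1)) \<in> Hs"
  shows "auto (W n) \<subseteq> Hs"
proof
  fix \<phi> assume p: "\<phi> \<in> auto (W n)"
  then obtain f where f: "good n f" "\<forall>k\<in>W_gens n. rd (f k)" "\<phi> = W_subst n f"
    using auto_is_W_subst by blast
  show "\<phi> \<in> Hs" using main_red[OF Hs gen_all(2)[OF assms] gen_all(1)[OF assms] f(1,2)] p f(3) by simp
qed



definition Fs :: "nat \<Rightarrow> nat \<Rightarrow> nat list" where
  "Fs j = (if j = 0 then \<sigma>s 1 2 else \<alpha>s (transpose j (j+1)))"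
definition Fa :: "nat \<Rightarrow> nat \<Rightarrow> nat list set \<Rightarrow> nat list set" where
  "Fa n j = (if j = 0 then sigma n 1 2 else alpha n (transpose j (j+1)))"

lemma Fa_eq: "Fa n j = W_subst n (Fs j)"
  by (simp add: Fa_def Fs_def sigma_eq alpha_eq)

lemma Fs_good: "2 \<le> n \<Longrightarrow> j < n \<Longrightarrow> good n (Fs j)"
  unfolding Fs_def
  by (auto intro!: good_\<sigma> good_\<alpha> transpose_gens simp: gens_range)

lemma Fa_auto: "2 \<le> n \<Longrightarrow> j < n \<Longrightarrow> Fa n j \<in> auto (W n)"
  unfolding Fa_def
  by (auto intro!: sigma_auto alpha_transpose_auto simp: gens_range)

fun cs :: "nat list \<Rightarrow> nat \<Rightarrow> nat list" where
  "cs [] = (\<lambda>k. [k])"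
| "cs (a#r) = csub (Fs a) (cs r)"

lemma cs_app: "cs (a#r) k = concat (map (Fs a) (cs r k))"
  by (simp add: csub_def)
lemma cs_nil: "cs [] k = [k]" by simp
declare cs.simps [simp del]

lemma ev_cs:
  assumes "2 \<le> n"
  shows "set r \<subseteq> G_gens n \<Longrightarrow> good n (cs r) \<and> W_subst n (cs r) \<in> auto (W n)
      \<and> ev (AutoGroup (W n)) (Fa n) r = W_subst n (cs r)"
proof (induction r)
  case Nil
  have "good n (\<lambda>k. [k])" by (auto simp: good_def)
  moreover have "\<one>\<^bsub>AutoGroup (W n)\<^esub> \<in> auto (W n)"
    using monoid.one_closed[OF group.is_monoid[OF AG_group]] by (simp add: AutoGroup_carrier)
  ultimately show ?case by (simp add: AG_one cs.simps)
next
  case (Cons a r)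
  have a: "a < n" using Cons.prems by (simp add: G_gens_def)
  have IH: "good n (cs r)" "W_subst n (cs r) \<in> auto (W n)" "ev (AutoGroup (W n)) (Fa n) r = W_subst n (cs r)"
    using Cons by auto
  have ga: "good n (Fs a)" using Fs_good[OF assms a] .
  have aa: "W_subst n (Fs a) \<in> auto (W n)" using Fa_auto[OF assms a] by (simp add: Fa_eq)
  have m: "W_subst n (Fs a) \<otimes>\<^bsub>AutoGroup (W n)\<^esub> W_subst n (cs r) = W_subst n (cs (a#r))"
    using W_subst_mult[OF ga IH(1) aa IH(2)] by (simp add: cs.simps)
  have "ev (AutoGroup (W n)) (Fa n) (a#r) = Fa n a \<otimes>\<^bsub>AutoGroup (W n)\<^esub> ev (AutoGroup (W n)) (Fa n) r"
    by simp
  also have "\<dots> = W_subst n (cs (a#r))" using m IH(3) by (simp only: Fa_eq)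
  finally show ?case using m IH AG_closed[OF aa IH(2)] good_csub[OF ga IH(1)] by (simp add: cs.simps)
qed

lemma ev_rel:
  assumes "2 \<le> n" "set r \<subseteq> G_gens n" "\<forall>k\<in>W_gens n. red (cs r k) = [k]"
  shows "ev (AutoGroup (W n)) (Fa n) r = \<one>\<^bsub>AutoGroup (W n)\<^esub>"
proof -
  have e: "good n (cs r)" "ev (AutoGroup (W n)) (Fa n) r = W_subst n (cs r)"
    using ev_cs[OF assms(1,2)] by auto
  have "W_subst n (cs r) = W_subst n (\<lambda>k. [k])"
    by (rule W_subst_cong(1)[OF e(1)]) (use assms(3) in auto)
  thus ?thesis using e(2) by (simp add: AG_one)
qed

lemma cox2: "cox_word a b 2 = [a,b,a,b]" by (simp add: cox_word_def numeral_eq_Suc)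
lemma cox3: "cox_word a b 3 = [a,b,a,b,a,b]" by (simp add: cox_word_def numeral_eq_Suc)
lemma cox4: "cox_word a b 4 = [a,b,a,b,a,b,a,b]" by (simp add: cox_word_def numeral_eq_Suc)

lemma rel_jj: "k \<ge> 1 \<Longrightarrow> red (cs [j,j] k) = [k]"
  by (cases "k = 2") (auto simp: cs_app cs_nil Fs_def \<sigma>s_def \<alpha>s_def transpose_def)

lemma rel_02:
  assumes "k \<ge> 1"
  shows "red (cs [0,2,0,2,0,2,0,2] k) = [k]"
proof -
  consider "k = 1" | "k = 2" | "k = 3" | "k \<ge> 4" using assms by linarith
  thus ?thesis
    by cases (auto simp: cs_app cs_nil Fs_def \<sigma>s_def \<alpha>s_def transpose_def)
qed

lemma rel_0j:
  assumes "k \<ge> 1" "j \<ge> 3"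
  shows "red (cs [0,j,0,j] k) = [k]"
proof -
  consider "k = 2" | "k = j" | "k = j + 1" | "k \<noteq> 2 \<and> k \<noteq> j \<and> k \<noteq> j + 1" by blast
  thus ?thesis
    by cases (use assms in \<open>auto simp: cs_app cs_nil Fs_def \<sigma>s_def \<alpha>s_def transpose_def\<close>)
qed

lemma rel_ii1:
  assumes "i \<ge> 1"
  shows "red (cs [i,i+1,i,i+1,i,i+1] k) = [k]"
  using assms by (auto simp: cs_app cs_nil Fs_def \<alpha>s_def transpose_def)

lemma rel_ij:
  assumes "i \<ge> 1" "j \<ge> 1" "i + 2 \<le> j \<or> j + 2 \<le> i"
  shows "red (cs [i,j,i,j] k) = [k]"
  using assms by (auto simp: cs_app cs_nil Fs_def \<alpha>s_def transpose_def)



lemma G_group: "group (G n)"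
  unfolding G_def by (rule pres_group_group) (auto simp: G_gens_def G_rels_def)

lemma rels_ok:
  assumes n2: "2 \<le> n"
  shows "\<forall>r\<in>G_rels n. set r \<subseteq> G_gens n \<longrightarrow> ev (AutoGroup (W n)) (Fa n) r = \<one>\<^bsub>AutoGroup (W n)\<^esub>"
proof (intro ballI impI)
  fix r assume r: "r \<in> G_rels n" "set r \<subseteq> G_gens n"
  show "ev (AutoGroup (W n)) (Fa n) r = \<one>\<^bsub>AutoGroup (W n)\<^esub>"
  proof (rule ev_rel[OF n2 r(2)])
    show "\<forall>k\<in>W_gens n. red (cs r k) = [k]"
    proof
      fix k assume k: "k \<in> W_gens n"
      hence k1: "k \<ge> 1" by (simp add: gens_range)
      have A: "red (cs [j,j] k) = [k]" for j using rel_jj[OF k1] .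
      have B: "red (cs (cox_word 0 2 4) k) = [k]" using rel_02[OF k1] by (simp add: cox4)
      have C: "red (cs (cox_word 0 j 2) k) = [k]" if "3 \<le> j" for j using rel_0j[OF k1 that] by (simp add: cox2)
      have D: "red (cs (cox_word i (i+1) 3) k) = [k]" if "1 \<le> i" for i using rel_ii1[OF that] by (simp add: cox3)
      have E: "red (cs (cox_word i j 2) k) = [k]" if "1 \<le> i" "1 \<le> j" "i + 2 \<le> j \<or> j + 2 \<le> i" for i j
        using rel_ij[OF that] by (simp add: cox2)
      show "red (cs r k) = [k]"
        using r(1) unfolding G_rels_def
        apply (elim UnE)
        subgoal using A by blast
        subgoal using B by (simp split: if_splits)
        subgoal using C by blast
        subgoal using D by blast
        subgoal using E by blast
        done
    qed
  qed
qed

lemma Fc: "2 \<le> n \<Longrightarrow> Fa n ` G_gens n \<subseteq> carrier (AutoGroup (W n))"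
  using Fa_auto by (auto simp: G_gens_def AutoGroup_carrier)

lemma AG_monoid: "monoid (AutoGroup (W n))"
  by (rule group.is_monoid[OF AG_group])

lemma h_gen:
  assumes n2: "2 \<le> n" "j < n"
  shows "pind (AutoGroup (W n)) (Fa n) (G_gen n j) = Fa n j"
proof -
  have "pind (AutoGroup (W n)) (Fa n) (G_gen n j) = ev (AutoGroup (W n)) (Fa n) [j]"
    unfolding G_gen_def by (rule pind_pcls[OF AG_monoid Fc[OF n2(1)] rels_ok[OF n2(1)]]) (use assms in \<open>simp add: G_gens_def\<close>)
  also have "\<dots> = Fa n j" using Fa_auto[OF assms] monoid.r_one[OF AG_monoid]
    by (simp add: AutoGroup_carrier)
  finally show ?thesis .
qed

lemma part1:
  fixes n :: nat
  assumes n2: "2 \<le> n"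
  shows "\<exists>h. h \<in> hom (G n) (AutoGroup (W n))
            \<and> h (G_gen n 0) = sigma n 1 2
            \<and> (\<forall>i. 1 \<le> i \<and> i \<le> n - 1 \<longrightarrow> h (G_gen n i) = alpha n (transpose i (i + 1)))
            \<and> h ` carrier (G n) = carrier (AutoGroup (W n))"
proof -
  let ?A = "AutoGroup (W n)"
  let ?h = "pind ?A (Fa n)"
  have hom: "?h \<in> hom (G n) ?A"
    unfolding G_def by (rule pind_hom[OF AG_monoid Fc[OF n2] rels_ok[OF n2]])
  have h0: "?h (G_gen n 0) = sigma n 1 2" using h_gen[OF n2, of 0] n2 by (simp add: Fa_def)
  have hi: "?h (G_gen n i) = alpha n (transpose i (i + 1))" if "1 \<le> i" "i \<le> n - 1" for i
    using h_gen[OF n2, of i] that n2 by (simp add: Fa_def)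
  have gh: "group_hom (G n) ?A ?h"
    using hom G_group AG_group by (simp add: group_hom_def group_hom_axioms_def)
  have sg: "subgroup (?h ` carrier (G n)) ?A" by (rule group_hom.img_is_subgroup[OF gh])
  have gc: "G_gen n j \<in> carrier (G n)" if "j < n" for j
    using that unfolding G_gen_def G_def by (intro pcls_in_carrier) (simp add: G_gens_def)
  have "0 < n" using n2 by simp
  have s12: "sigma n 1 2 \<in> ?h ` carrier (G n)" by (rule image_eqI[where f = ?h, OF h0[symmetric] gc[OF \<open>0 < n\<close>]])
  have adj: "alpha n (transpose i (i + 1)) \<in> ?h ` carrier (G n)" if "1 \<le> i" "i \<le> n - 1" for i
  proof -
    have "i < n" using that n2 by simp
    thus ?thesis by (rule image_eqI[where f = ?h, OF hi[OF that, symmetric] gc])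
  qed
  have "auto (W n) \<subseteq> ?h ` carrier (G n)" by (rule auto_sub[OF sg s12 n2 adj])
  moreover have "?h ` carrier (G n) \<subseteq> carrier ?A" using hom by (auto simp: hom_def)
  ultimately have "?h ` carrier (G n) = carrier ?A" by (auto simp: AutoGroup_carrier)
  thus ?thesis using hom h0 hi by blast
qed



definition LL :: "nat \<Rightarrow> nat list set" where
  "LL n = {[a] | a. 2 \<le> a \<and> a \<le> n} \<union> {[1,a,1] | a. 2 \<le> a \<and> a \<le> n}"

definition Fset :: "nat \<Rightarrow> (nat list set \<Rightarrow> nat list set) set" where
  "Fset n = {W_subst n f | f. good n f \<and> f 1 = [1] \<and> (\<forall>k. 2 \<le> k \<and> k \<le> n \<longrightarrow> f k \<in> LL n)}"

lemma LL_red: "x \<in> LL n \<Longrightarrow> red x = x"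
  by (auto simp: LL_def)

lemma Fset_mult:
  assumes x: "x \<in> Fset n" "x \<in> auto (W n)" and y: "y \<in> Fset n" "y \<in> auto (W n)"
  shows "x \<otimes>\<^bsub>AutoGroup (W n)\<^esub> y \<in> Fset n"
proof -
  obtain f where f: "x = W_subst n f" "good n f" "f 1 = [1]" "\<forall>k. 2 \<le> k \<and> k \<le> n \<longrightarrow> f k \<in> LL n"
    using x(1) by (auto simp: Fset_def)
  obtain g where g: "y = W_subst n g" "good n g" "g 1 = [1]" "\<forall>k. 2 \<le> k \<and> k \<le> n \<longrightarrow> g k \<in> LL n"
    using y(1) by (auto simp: Fset_def)
  have m: "x \<otimes>\<^bsub>AutoGroup (W n)\<^esub> y = W_subst n (csub f g)"
    using W_subst_mult[OF f(2) g(2)] x(2) y(2) f(1) g(1) by simp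
  define h where "h k = red (csub f g k)" for k
  have gc: "good n (csub f g)" by (rule good_csub[OF f(2) g(2)])
  have hc: "\<forall>k\<in>W_gens n. set (h k) \<subseteq> W_gens n \<and> red (csub f g k) = red (h k)"
  proof
    fix k assume "k \<in> W_gens n"
    hence "set (csub f g k) \<subseteq> W_gens n" using gc by (simp add: good_def)
    thus "set (h k) \<subseteq> W_gens n \<and> red (csub f g k) = red (h k)"
      using set_red[of "csub f g k"] by (simp add: h_def)
  qed
  have e: "W_subst n (csub f g) = W_subst n h" "good n h"
    using W_subst_cong[OF gc hc] by auto
  have h1: "h 1 = [1]" using f(3) g(3) by (simp add: h_def csub_def)
  have hk: "h k \<in> LL n" if k: "2 \<le> k" "k \<le> n" for k
  proof -
    have "g k \<in> LL n" using g(4) k by simp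
    then obtain a where a: "2 \<le> a" "a \<le> n" "g k = [a] \<or> g k = [1,a,1]" by (auto simp: LL_def)
    have fa: "f a \<in> LL n" using f(4) a by simp
    then obtain b where b: "2 \<le> b" "b \<le> n" "f a = [b] \<or> f a = [1,b,1]" by (auto simp: LL_def)
    from a(3) show ?thesis
    proof
      assume "g k = [a]"
      hence "h k = red (f a)" by (simp add: h_def csub_def)
      thus ?thesis using LL_red[OF fa] fa by simp
    next
      assume ga: "g k = [1,a,1]"
      hence hk: "h k = red ([1] @ f a @ [1])" using f(3) by (simp add: h_def csub_def)
      from b(3) show ?thesis
      proof
        assume "f a = [b]"
        thus ?thesis using hk b by (auto simp: LL_def)
      next
        assume "f a = [1,b,1]"
        thus ?thesis using hk b by (auto simp: LL_def)
      qed
    qed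
  qed
  show ?thesis unfolding m e(1) Fset_def using e(2) h1 hk by blast
qed

lemma finite_part:
  assumes n2: "2 \<le> n"
  shows "finite (generate (AutoGroup (W n))
            ({sigma n 1 2} \<union> {alpha n (transpose i (i + 1)) | i. 2 \<le> i \<and> i \<le> n - 1}))"
proof -
  let ?A = "AutoGroup (W n)"
  let ?S = "{sigma n 1 2} \<union> {alpha n (transpose i (i + 1)) | i. 2 \<le> i \<and> i \<le> n - 1}"
  have g12: "1 \<in> W_gens n" "2 \<in> W_gens n" using n2 by (auto simp: gens_range)
  have S: "s \<in> auto (W n) \<and> s \<in> Fset n \<and> s \<otimes>\<^bsub>?A\<^esub> s = \<one>\<^bsub>?A\<^esub>" if sS: "s \<in> ?S" for s
  proof (cases "s = sigma n 1 2")
    case True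
    have "sigma n 1 2 \<in> Fset n" unfolding Fset_def sigma_eq
      using good_\<sigma>[OF g12] by (auto simp: \<sigma>s_def LL_def intro!: exI[of _ "\<sigma>s 1 2"])
    thus ?thesis using True sigma_auto[OF g12] sigma_sq[OF g12] by simp
  next
    case False
    then obtain i where i: "s = alpha n (transpose i (i + 1))" "2 \<le> i" "i \<le> n - 1" using sS by blast
    have gi: "i \<in> W_gens n" "i + 1 \<in> W_gens n" using i n2 by (auto simp: gens_range)
    have tg: "\<forall>k\<in>W_gens n. transpose i (i+1) k \<in> W_gens n" using transpose_gens[OF gi] by blast
    have au: "alpha n (transpose i (i + 1)) \<in> auto (W n)" by (rule alpha_transpose_auto[OF gi])
    have "alpha n (transpose i (i + 1)) \<otimes>\<^bsub>?A\<^esub> alpha n (transpose i (i + 1)) = alpha n (transpose i (i+1) \<circ> transpose i (i+1))"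
      by (rule alpha_mult[OF tg tg au au])
    also have "transpose i (i+1) \<circ> transpose i (i+1) = id" by (auto simp: transpose_def fun_eq_iff)
    finally have sq: "alpha n (transpose i (i + 1)) \<otimes>\<^bsub>?A\<^esub> alpha n (transpose i (i + 1)) = \<one>\<^bsub>?A\<^esub>"
      using alpha_id[of n] by (simp only:)
    have gt: "good n (\<alpha>s (transpose i (i + 1)))" by (rule good_\<alpha>[OF tg])
    have "alpha n (transpose i (i + 1)) \<in> Fset n" unfolding Fset_def alpha_eq
    proof (intro CollectI exI conjI)
      show "good n (\<alpha>s (transpose i (i + 1)))" by (rule gt)
      show "\<alpha>s (transpose i (i + 1)) 1 = [1]" using i by (simp add: \<alpha>s_def transpose_def)
      show "\<forall>k. 2 \<le> k \<and> k \<le> n \<longrightarrow> \<alpha>s (transpose i (i + 1)) k \<in> LL n"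
        using i n2 by (auto simp: \<alpha>s_def transpose_def LL_def)
    qed simp
    thus ?thesis using i au sq by simp
  qed
  have inv: "x \<in> auto (W n) \<and> x \<in> Fset n" if "x \<in> generate ?A ?S" for x
    using that
  proof (induction rule: generate.induct)
    case one
    have "\<one>\<^bsub>?A\<^esub> \<in> auto (W n)"
      using monoid.one_closed[OF AG_monoid] by (simp add: AutoGroup_carrier)
    moreover have "\<one>\<^bsub>?A\<^esub> \<in> Fset n" unfolding AG_one Fset_def
      by (auto simp: good_def LL_def intro!: exI[of _ "\<lambda>k. [k]"])
    ultimately show ?case by simp
  next
    case (incl h) thus ?case using S by blast
  next
    case (inv h)
    have "inv\<^bsub>?A\<^esub> h = h"
      using S[OF inv] group.inv_equality[OF AG_group[of n], of h h] by (simp add: AutoGroup_carrier)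
    thus ?case using S[OF inv] by simp
  next
    case (eng h1 h2)
    thus ?case using Fset_mult AG_closed by blast
  qed
  have fin: "finite (Fset n)"
  proof -
    have fL: "finite (LL n)"
    proof (rule finite_subset)
      show "LL n \<subseteq> (\<lambda>a. [a]) ` {..n} \<union> (\<lambda>a. [1,a,1]) ` {..n}" by (auto simp: LL_def)
    qed simp
    have "Fset n \<subseteq> (\<lambda>g. W_subst n g) ` (PiE (W_gens n) (\<lambda>_. insert [1] (LL n)))"
    proof
      fix x assume "x \<in> Fset n"
      then obtain f where f: "x = W_subst n f" "f 1 = [1]" "\<forall>k. 2 \<le> k \<and> k \<le> n \<longrightarrow> f k \<in> LL n"
        by (auto simp: Fset_def)
      have "restrict f (W_gens n) \<in> PiE (W_gens n) (\<lambda>_. insert [1] (LL n))"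
      proof (rule restrict_PiE_iff[THEN iffD2], intro ballI)
        fix k assume "k \<in> W_gens n"
        thus "f k \<in> insert [1] (LL n)" using f by (cases "k = 1") (auto simp: gens_range)
      qed
      moreover have "x = W_subst n (restrict f (W_gens n))"
        unfolding f(1) by (rule W_subst_restrict) simp
      ultimately show "x \<in> (\<lambda>g. W_subst n g) ` (PiE (W_gens n) (\<lambda>_. insert [1] (LL n)))" by blast
    qed
    moreover have "finite (PiE (W_gens n) (\<lambda>_. insert [1] (LL n)))"
      by (rule finite_PiE[OF finite_gens]) (simp add: fL)
    ultimately show ?thesis by (rule finite_subset[OF _ finite_imageI])
  qed
  show ?thesis by (rule finite_subset[OF _ fin]) (use inv in blast)
qed


theorem corollary2p2:
  fixes n :: nat
  assumes "2 \<le> n"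
  shows "(\<exists>h. h \<in> hom (G n) (AutoGroup (W n))
            \<and> h (G_gen n 0) = sigma n 1 2
            \<and> (\<forall>i. 1 \<le> i \<and> i \<le> n - 1 \<longrightarrow> h (G_gen n i) = alpha n (transpose i (i + 1)))
            \<and> h ` carrier (G n) = carrier (AutoGroup (W n)))
       \<and> finite (generate (AutoGroup (W n))
            ({sigma n 1 2} \<union> {alpha n (transpose i (i + 1)) | i. 2 \<le> i \<and> i \<le> n - 1}))"
  using part1[OF assms] finite_part[OF assms] by blast

end
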